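(* Let ${\tt l}_1\ge 3$, ${\tt l}_2\ge 1$, ${\tt r}$ be positive integers with positive design rate $1-\frac{{\tt l}_1+{\tt l}_2}{{\tt r}}>0$. Consider the regular two edge type LDPC ensemble $\{{\tt l}_1,{\tt l}_2,{\tt r},{\tt r}\}$ of blocklength $n$, let $N(n,\omega n)$ be the number of stopping sets of size $\omega n$ of a randomly chosen code from this ensemble, and let $\mathbb{E}(N(n,\omega n))$ be its average over the ensemble. Then for every $\omega\in(0,1)$ the growth rate $\lim_{n\to\infty}\frac{1}{n}\ln \mathbb{E}(N(n,\omega n))$ (along $n$ for which the quantities are integral) equals the growth rate $\lim_{n\to\infty}\frac{1}{n}\ln \mathbb{E}(N'(n,\omega n))$ of the average stopping set distribution $N'$ of the standard regular $\{{\tt l}_1+{\tt l}_2,{\tt r}\}$ LDPC ensemble. In particular, the minimum stopping set distance of the $\{{\tt l}_1,{\tt l}_2,{\tt r},{\tt r}\}$ ensemble grows linearly in $n$: there exists $\omega^*>0$ such that the probability that a randomly chosen code from the ensemble has a nonempty stopping set of size at most $\omega^* n$ tends to $0$ as $n\to\infty$.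
   Context: The regular two edge type LDPC ensemble $\{{\tt l}_1,{\tt l}_2,{\tt r}_1,{\tt r}_2\}$ of blocklength $n$ consists of all bipartite graphs (multiple edges between a variable node and a check node allowed) with $n$ variable nodes, each connected to ${\tt l}_i$ check nodes of type $i$ (via ${\tt l}_i$ edges of type $i$), and $\frac{{\tt l}_i n}{{\tt r}_i}$ check nodes of type $i$, each of degree ${\tt r}_i$, $i\in\{1,2\}$; a random code is obtained by connecting the type-$i$ edge sockets of variable and check nodes via a uniformly random permutation, independently for $i=1,2$. The standard regular $\{{\tt l},{\tt r}\}$ LDPC ensemble is the analogous single edge type ensemble (variable degree ${\tt l}$, check degree ${\tt r}$, uniformly random socket permutation). A stopping set of a code is a subset $S$ of the variable nodes such that every check node adjacent to $S$ is connected to $S$ at least twice. *)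

theory Defs
  imports "HOL-Analysis.Analysis" "HOL-Combinatorics.Permutations"
begin

text \<open>For one edge type with variable degree l, check degree r and
  blocklength n there are l*n variable sockets and l*n check sockets, both numbered
  0..<l*n. Variable socket k belongs to variable node k div l, check socket j belongs
  to check node j div r (so there are l*n div r check nodes). A graph is given by a
  permutation p of the sockets {..<l*n}: variable socket k is joined to check socket p k.
  Multiple edges are allowed automatically.\<close>

definition socket_perms :: "nat \<Rightarrow> (nat \<Rightarrow> nat) set" where
  "socket_perms m = {p. p permutes {..<m}}"

definition edges_to :: "nat \<Rightarrow> nat \<Rightarrow> nat \<Rightarrow> (nat \<Rightarrow> nat) \<Rightarrow> nat set \<Rightarrow> nat \<Rightarrow> nat" where
  "edges_to l r n p S c = card {k \<in> {..<l*n}. k div l \<in> S \<and> p k div r = c}"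

definition stopping1 :: "nat \<Rightarrow> nat \<Rightarrow> nat \<Rightarrow> (nat \<Rightarrow> nat) \<Rightarrow> nat set \<Rightarrow> bool" where
  "stopping1 l r n p S \<longleftrightarrow> S \<subseteq> {..<n} \<and> (\<forall>c < l*n div r. edges_to l r n p S c \<noteq> 1)"

text \<open>Stopping set for the two edge type {l1,l2,r1,r2} ensemble graph given by (p1,p2);
  type-1 and type-2 check nodes are distinct nodes.\<close>
definition stopping2 :: "nat \<Rightarrow> nat \<Rightarrow> nat \<Rightarrow> nat \<Rightarrow> nat \<Rightarrow> (nat \<Rightarrow> nat) \<Rightarrow> (nat \<Rightarrow> nat)
    \<Rightarrow> nat set \<Rightarrow> bool" where
  "stopping2 l1 l2 r1 r2 n p1 p2 S \<longleftrightarrow> S \<subseteq> {..<n}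
     \<and> (\<forall>c < l1*n div r1. edges_to l1 r1 n p1 S c \<noteq> 1)
     \<and> (\<forall>c < l2*n div r2. edges_to l2 r2 n p2 S c \<noteq> 1)"

definition avg_N1 :: "nat \<Rightarrow> nat \<Rightarrow> nat \<Rightarrow> nat \<Rightarrow> real" where
  "avg_N1 l r n m =
     (\<Sum>p\<in>socket_perms (l*n). real (card {S. stopping1 l r n p S \<and> card S = m}))
     / real (card (socket_perms (l*n)))"

definition avg_N2 :: "nat \<Rightarrow> nat \<Rightarrow> nat \<Rightarrow> nat \<Rightarrow> nat \<Rightarrow> nat \<Rightarrow> real" where
  "avg_N2 l1 l2 r1 r2 n m =
     (\<Sum>(p1,p2)\<in>socket_perms (l1*n) \<times> socket_perms (l2*n).
         real (card {S. stopping2 l1 l2 r1 r2 n p1 p2 S \<and> card S = m}))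
     / real (card (socket_perms (l1*n)) * card (socket_perms (l2*n)))"

definition prob_small_stop2 :: "nat \<Rightarrow> nat \<Rightarrow> nat \<Rightarrow> nat \<Rightarrow> nat \<Rightarrow> real \<Rightarrow> real" where
  "prob_small_stop2 l1 l2 r1 r2 n w =
     real (card {(p1,p2)\<in>socket_perms (l1*n) \<times> socket_perms (l2*n).
          \<exists>S. S \<noteq> {} \<and> real (card S) \<le> w * real n \<and> stopping2 l1 l2 r1 r2 n p1 p2 S})
     / real (card (socket_perms (l1*n)) * card (socket_perms (l2*n)))"

text \<open>Filter: n \<rightarrow> \<infinity> along blocklengths for which the numbers of check nodes are integral.\<close>
definition admissible_n :: "nat \<Rightarrow> nat \<Rightarrow> nat \<Rightarrow> nat \<Rightarrow> nat filter" where
  "admissible_n l1 l2 r1 r2 = inf at_top (principal {n. r1 dvd l1*n \<and> r2 dvd l2*n})"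

end

theory Submission
  imports Defs
begin


lemma super_pow:
  fixes c :: "nat \<Rightarrow> nat \<Rightarrow> nat"
  assumes super: "\<And>N1 N2 E1 E2. c N1 E1 * c N2 E2 \<le> c (N1+N2) (E1+E2)"
  and one: "c 0 0 \<ge> 1"
  shows "c N E ^ s \<le> c (s*N) (s*E)"
proof (induction s)
  case 0 then show ?case using one by simp
next
  case (Suc s)
  have "c N E ^ Suc s = c N E * c N E ^ s" by simp
  also have "\<dots> \<le> c N E * c (s*N) (s*E)" using Suc by simp
  also have "\<dots> \<le> c (N + s*N) (E + s*E)" by (rule super)
  finally show ?case by simp
qed

lemma K_step:
  fixes c :: "nat \<Rightarrow> nat \<Rightarrow> nat" and d :: nat and \<rho> \<delta> \<eta> :: real
  assumes super: "\<And>N1 N2 E1 E2. c N1 E1 * c N2 E2 \<le> c (N1+N2) (E1+E2)"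
  and pos: "\<And>N E. E = 0 \<or> 2 \<le> E \<Longrightarrow> E \<le> d*N \<Longrightarrow> c N E \<ge> 1"
  and rho: "0 < \<rho>" "\<rho> < d" and del: "0 < \<delta>" "\<delta> < 1"
  and eta: "\<eta> = \<delta> * min \<rho> (d - \<rho>) / 4"
  and N0: "N0 > 0" "\<bar>E0 - \<rho> * N0\<bar> \<le> \<eta> * N0" "c N0 E0 \<ge> 1"
  and N: "real N \<ge> 4 / (\<rho> * \<delta>)" "\<bar>E - \<rho> * N\<bar> \<le> \<eta> * N"
  shows "ln (c N E) \<ge> real (nat \<lfloor>(1-\<delta>)*N/N0\<rfloor>) * ln (c N0 E0)"
proof -
  define s where "s = nat \<lfloor>(1-\<delta>)*N/N0\<rfloor>"
  have s_le: "real s \<le> (1-\<delta>)*N/N0" unfolding s_def using del by simp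
  have sN0: "real s * N0 \<le> (1-\<delta>)*N" using s_le N0 by (simp add: pos_le_divide_eq)
  have sN0n: "s * N0 \<le> N"
  proof -
    have d1: "(1-\<delta>)*real N \<le> real N" using del by (simp add: algebra_simps)
    have "real (s*N0) \<le> real N" using sN0 d1 by simp
    then show ?thesis by linarith
  qed
  define R where "R = N - s*N0"
  have Rr: "real R = real N - real s * N0" unfolding R_def using sN0n by (simp add: of_nat_diff)
  have Rge: "real R \<ge> \<delta> * N" using Rr sN0 by (simp add: algebra_simps)
  define m where "m = min \<rho> (d - \<rho>)"
  have m: "m > 0" "m \<le> \<rho>" "m \<le> d - \<rho>" using rho unfolding m_def by auto
  have sE0: "\<bar>real s * E0 - \<rho> * (real s * N0)\<bar> \<le> \<eta> * (real s * N0)"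
  proof -
    have "\<bar>real s * E0 - \<rho> * (real s * N0)\<bar> = real s * \<bar>E0 - \<rho> * N0\<bar>"
    proof -
      have "real s * E0 - \<rho> * (real s * N0) = real s * (E0 - \<rho> * N0)" by (simp add: algebra_simps)
      then show ?thesis by (simp add: abs_mult)
    qed
    also have "\<dots> \<le> real s * (\<eta> * N0)" using N0 by (simp add: mult_left_mono)
    finally show ?thesis by (simp add: algebra_simps)
  qed
  have eta0: "\<eta> \<ge> 0" unfolding eta using del m unfolding m_def by simp
  have sN0N: "\<eta> * (real s * N0) \<le> \<eta> * N" using sN0 del eta0
  proof (intro mult_left_mono)
    show "real s * real N0 \<le> real N" using sN0 del by (smt (verit) mult_left_le_one_le of_nat_0_le_iff)
  qed (use eta0 in auto)
  define RE where "RE = real E - real s * E0"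
  have dev: "\<bar>RE - \<rho> * R\<bar> \<le> 2 * \<eta> * N"
  proof -
    have "RE - \<rho> * R = (E - \<rho> * N) - (real s * E0 - \<rho> * (real s * N0))"
      unfolding RE_def Rr by (simp add: algebra_simps)
    then have "\<bar>RE - \<rho> * R\<bar> \<le> \<bar>E - \<rho> * N\<bar> + \<bar>real s * E0 - \<rho> * (real s * N0)\<bar>" by linarith
    then show ?thesis using N sE0 sN0N by linarith
  qed
  have etaN: "2 * \<eta> * N \<le> m * R / 2"
  proof -
    have "2 * \<eta> * N = m * (\<delta> * N) / 2" unfolding eta m_def by simp
    also have "\<dots> \<le> m * R / 2" using Rge m by (intro divide_right_mono mult_left_mono) auto
    finally show ?thesis .
  qed
  have REge: "RE \<ge> 2"
  proof -
    have "RE \<ge> \<rho> * R - m * R / 2" using dev etaN by linarith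
    moreover have "\<rho> * R - m * R / 2 \<ge> \<rho> * R / 2" using m Rge
      by (smt (verit, best) field_sum_of_halves mult_right_mono of_nat_0_le_iff)
    moreover have "\<rho> * R / 2 \<ge> \<rho> * (\<delta> * N) / 2" using Rge rho by simp
    moreover have "\<rho> * (\<delta> * N) \<ge> 4"
    proof -
      have "4 / (\<rho> * \<delta>) * (\<rho> * \<delta>) \<le> N * (\<rho> * \<delta>)" using N(1) rho del by (intro mult_right_mono) auto
      then show ?thesis using rho del by (simp add: algebra_simps)
    qed
    ultimately show ?thesis by linarith
  qed
  have REle: "RE \<le> d * R"
  proof -
    have "RE \<le> \<rho> * R + m * R / 2" using dev etaN by linarith
    also have "\<dots> \<le> \<rho> * R + (d - \<rho>) * R"
    proof -
      have a: "m * R \<le> (d - \<rho>) * R" using m by (intro mult_right_mono) auto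
      have "m * R \<ge> 0" using m by simp
      then show ?thesis using a by linarith
    qed
    finally show ?thesis by (simp add: algebra_simps)
  qed
  have sE0n: "s * E0 \<le> E" using REge unfolding RE_def
    by (metis diff_ge_0_iff_ge le_numeral_extra(1) of_nat_le_iff of_nat_mult order.trans rel_simps(25) zero_le_numeral)
  define R2 where "R2 = E - s * E0"
  have R2r: "real R2 = RE" unfolding R2_def RE_def using sE0n by (simp add: of_nat_diff)
  have cR: "c R R2 \<ge> 1"
  proof (rule pos)
    show "R2 = 0 \<or> 2 \<le> R2" using REge R2r by linarith
    have "real R2 \<le> real (d * R)" using R2r REle by simp
    then show "R2 \<le> d * R" by linarith
  qed
  have "c N0 E0 ^ s \<le> c (s*N0) (s*E0)"
    by (rule super_pow[of c, OF super]) (use pos[of 0 0] in auto)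
  also have "\<dots> \<le> c (s*N0) (s*E0) * c R R2" using cR by simp
  also have "\<dots> \<le> c (s*N0 + R) (s*E0 + R2)" by (rule super)
  also have "s*N0 + R = N" unfolding R_def using sN0n by simp
  also have "s*E0 + R2 = E" unfolding R2_def using sE0n by simp
  finally have ineq: "real (c N0 E0 ^ s) \<le> real (c N E)" by linarith
  have "real s * ln (c N0 E0) = ln (real (c N0 E0 ^ s))" using N0 by (simp add: ln_realpow)
  also have "\<dots> \<le> ln (c N E)"
  proof -
    have "1 \<le> c N0 E0 ^ s" using N0(3) by (simp add: one_le_power)
    then have "real (c N0 E0 ^ s) > 0" by linarith
    moreover have "real (c N E) > 0" using ineq \<open>real (c N0 E0 ^ s) > 0\<close> by linarith
    ultimately show ?thesis using ineq by (subst ln_le_cancel_iff) auto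
  qed
  finally show ?thesis unfolding s_def .
qed

definition Sv :: "(nat \<Rightarrow> nat \<Rightarrow> nat) \<Rightarrow> real \<Rightarrow> real \<Rightarrow> real set" where
  "Sv c \<rho> \<eta> = {ln (c N E) / N | N E. 0 < N \<and> 1 \<le> c N E \<and> \<bar>real E / real N - \<rho>\<bar> < \<eta>}"

definition psi :: "(nat \<Rightarrow> nat \<Rightarrow> nat) \<Rightarrow> real \<Rightarrow> real" where
  "psi c \<rho> = Inf ((\<lambda>\<eta>. Sup (Sv c \<rho> \<eta>)) ` {0<..})"

lemma nat_floor_bounds:
  fixes x :: real assumes "x \<ge> 0"
  shows "real (nat \<lfloor>x\<rfloor>) \<le> x" "real (nat \<lfloor>x\<rfloor>) > x - 1"
proof -
  have e: "real (nat \<lfloor>x\<rfloor>) = real_of_int \<lfloor>x\<rfloor>" using assms by simp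
  show "real (nat \<lfloor>x\<rfloor>) \<le> x" "real (nat \<lfloor>x\<rfloor>) > x - 1"
    unfolding e using floor_correct[of x] by linarith+
qed

lemma abs_dev: fixes E N \<rho> :: real assumes "N > 0"
  shows "\<bar>E - \<rho> * N\<bar> = \<bar>E / N - \<rho>\<bar> * N"
proof -
  have "E - \<rho> * N = (E / N - \<rho>) * N" using assms by (simp add: field_simps)
  then show ?thesis using assms by (simp add: abs_mult)
qed

lemma Sv_nonempty:
  fixes c :: "nat \<Rightarrow> nat \<Rightarrow> nat" and d :: nat and \<rho> \<eta> :: real
  assumes pos: "\<And>N E. E = 0 \<or> 2 \<le> E \<Longrightarrow> E \<le> d*N \<Longrightarrow> c N E \<ge> 1"
  and rho: "0 < \<rho>" "\<rho> < d" and eta: "\<eta> > 0"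
  shows "Sv c \<rho> \<eta> \<noteq> {}"
proof -
  define N where "N = nat \<lceil>1/\<eta> + 3/\<rho>\<rceil> + 1"
  have t: "1/\<eta> + 3/\<rho> \<le> real (nat \<lceil>1/\<eta> + 3/\<rho>\<rceil>)" by (rule real_nat_ceiling_ge)
  have rN': "real N = real (nat \<lceil>1/\<eta> + 3/\<rho>\<rceil>) + 1" unfolding N_def by (simp only: of_nat_add of_nat_1)
  have pp: "1/\<eta> > 0" "3/\<rho> > 0" using eta rho by auto
  have N1: "real N > 1/\<eta>" "real N > 3/\<rho>" using rN' t pp by linarith+
  have Npos: "N > 0" unfolding N_def by simp
  define E where "E = nat \<lfloor>\<rho> * N\<rfloor>"
  have rN: "\<rho> * N > 3" using N1 rho by (simp add: divide_less_eq mult.commute)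
  have E1: "real E \<le> \<rho> * N" "real E > \<rho> * N - 1" unfolding E_def using nat_floor_bounds[of "\<rho> * N"] rN by auto
  have "E \<ge> 2" using E1 rN by linarith
  moreover have "E \<le> d * N"
  proof -
    have "\<rho> * N \<le> real d * real N" using rho by (intro mult_right_mono) auto
    then have "real E \<le> real (d*N)" using E1 by simp
    then show ?thesis by linarith
  qed
  ultimately have c1: "c N E \<ge> 1" using pos by blast
  have "\<bar>real E / real N - \<rho>\<bar> \<le> 1 / N"
  proof -
    have "\<bar>real E - \<rho> * N\<bar> \<le> 1" using E1 by linarith
    then have "\<bar>real E - \<rho> * N\<bar> / N \<le> 1 / N" using Npos by (intro divide_right_mono) auto
    moreover have "\<bar>real E - \<rho> * N\<bar> / N = \<bar>real E / real N - \<rho>\<bar>" using Npos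
      by (simp add: abs_div_pos diff_divide_distrib)
    ultimately show ?thesis by simp
  qed
  also have "1 / N < \<eta>" using N1 eta Npos by (simp add: divide_less_eq mult.commute)
  finally have "ln (c N E) / N \<in> Sv c \<rho> \<eta>" unfolding Sv_def using Npos c1 by blast
  then show ?thesis by blast
qed

lemma Sv_bounds:
  fixes c :: "nat \<Rightarrow> nat \<Rightarrow> nat" and b :: real
  assumes bound: "\<And>N E. real (c N E) \<le> b ^ N" and b: "b \<ge> 1"
  and x: "x \<in> Sv c \<rho> \<eta>"
  shows "0 \<le> x" "x \<le> ln b"
proof -
  obtain N E where x: "x = ln (c N E) / N" and N: "0 < N" "1 \<le> c N E"
    using x unfolding Sv_def by blast
  show "0 \<le> x" unfolding x using N by simp
  have "ln (c N E) \<le> ln (b ^ N)" using N bound[of N E] by (subst ln_le_cancel_iff) auto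
  also have "\<dots> = N * ln b" using b by (simp add: ln_realpow)
  finally show "x \<le> ln b" unfolding x using N by (simp add: divide_le_eq mult.commute)
qed

lemma limit_K:
  fixes c :: "nat \<Rightarrow> nat \<Rightarrow> nat" and d :: nat and b \<rho> :: real
    and Nf Ef :: "'a \<Rightarrow> nat"
  assumes super: "\<And>N1 N2 E1 E2. c N1 E1 * c N2 E2 \<le> c (N1+N2) (E1+E2)"
  and pos: "\<And>N E. E = 0 \<or> 2 \<le> E \<Longrightarrow> E \<le> d*N \<Longrightarrow> c N E \<ge> 1"
  and bound: "\<And>N E. real (c N E) \<le> b ^ N" and b: "b \<ge> 1"
  and rho: "0 < \<rho>" "\<rho> < d"
  and Nlim: "filterlim Nf at_top F"
  and Rlim: "((\<lambda>x. real (Ef x) / real (Nf x)) \<longlongrightarrow> \<rho>) F"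
  shows "((\<lambda>x. ln (c (Nf x) (Ef x)) / Nf x) \<longlongrightarrow> psi c \<rho>) F"
proof -
  define U where "U = (\<lambda>\<eta>. Sup (Sv c \<rho> \<eta>))"
  have ne: "\<And>\<eta>. \<eta> > 0 \<Longrightarrow> Sv c \<rho> \<eta> \<noteq> {}" by (rule Sv_nonempty[of d c, OF pos rho]) auto
  have bdd: "\<And>\<eta>. bdd_above (Sv c \<rho> \<eta>)" using Sv_bounds(2)[OF bound b] by (meson bdd_aboveI)
  have U0: "\<And>\<eta>. \<eta> > 0 \<Longrightarrow> U \<eta> \<ge> 0"
  proof -
    fix \<eta> :: real assume "\<eta> > 0"
    then obtain x where x: "x \<in> Sv c \<rho> \<eta>" using ne by blast
    then have "x \<le> U \<eta>" unfolding U_def using bdd by (intro cSup_upper) auto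
    then show "U \<eta> \<ge> 0" using Sv_bounds(1)[OF bound b x] by linarith
  qed
  have Ine: "U ` {0<..} \<noteq> {}" by auto
  have Ibdd: "bdd_below (U ` {0<..})" using U0 by (intro bdd_belowI[of _ 0]) auto
  have psiU: "psi c \<rho> = Inf (U ` {0<..})" unfolding psi_def U_def by simp
  have Nev: "\<And>T::real. eventually (\<lambda>x. real (Nf x) \<ge> T) F"
  proof -
    fix T :: real
    have "eventually (\<lambda>x. nat \<lceil>T\<rceil> \<le> Nf x) F" using Nlim unfolding filterlim_at_top by blast
    then show "eventually (\<lambda>x. real (Nf x) \<ge> T) F"
      by eventually_elim (use real_nat_ceiling_ge[of T] in linarith)
  qed
  have Rev: "\<And>e. e > 0 \<Longrightarrow> eventually (\<lambda>x. \<bar>real (Ef x) / real (Nf x) - \<rho>\<bar> < e) F"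
    using Rlim by (drule_tac tendstoD) (auto simp: dist_real_def)
  show ?thesis
  proof (rule order_tendstoI)
    fix a assume a: "psi c \<rho> < a"
    then obtain \<eta> where eta: "\<eta> > 0" "U \<eta> < a" using cInf_lessD[OF Ine] psiU by auto
    define e where "e = min \<eta> (min (\<rho>/2) (real d - \<rho>))"
    have e: "e > 0" using eta rho unfolding e_def by auto
    show "eventually (\<lambda>x. ln (c (Nf x) (Ef x)) / Nf x < a) F"
      using Rev[OF e] Nev[of "4/\<rho>"] Nev[of 1]
    proof eventually_elim
      case (elim x)
      let ?N = "Nf x" and ?E = "Ef x"
      have Np: "real ?N > 0" using elim by linarith
      have r1: "real ?E / ?N > \<rho> / 2" "real ?E / ?N < d" "\<bar>real ?E / ?N - \<rho>\<bar> < \<eta>"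
      proof -
        have "e \<le> \<eta>" "e \<le> \<rho>/2" "e \<le> real d - \<rho>" unfolding e_def by linarith+
        then show "real ?E / ?N > \<rho> / 2" "real ?E / ?N < d" "\<bar>real ?E / ?N - \<rho>\<bar> < \<eta>"
          using elim(1) by linarith+
      qed
      have "real ?E > \<rho> / 2 * ?N" using r1 Np by (simp add: less_divide_eq)
      moreover have "\<rho> / 2 * ?N \<ge> 2" using elim(2) rho by (simp add: divide_le_eq mult.commute)
      ultimately have E2: "2 \<le> ?E" by linarith
      have "real ?E < d * ?N" using r1 Np by (simp add: divide_less_eq)
      then have "?E \<le> d * ?N" by (metis less_imp_le of_nat_le_iff of_nat_mult)
      then have c1: "c ?N ?E \<ge> 1" using pos E2 by blast
      have "ln (c ?N ?E) / ?N \<in> Sv c \<rho> \<eta>" unfolding Sv_def using Np c1 r1(3) by auto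
      then have "ln (c ?N ?E) / ?N \<le> U \<eta>" unfolding U_def using bdd by (intro cSup_upper) auto
      then show ?case using eta by linarith
    qed
  next
    fix a assume a: "a < psi c \<rho>"
    define \<epsilon> where "\<epsilon> = psi c \<rho> - a"
    have ep: "\<epsilon> > 0" using a unfolding \<epsilon>_def by simp
    define B where "B = ln b"
    have B0: "B \<ge> 0" unfolding B_def using b by simp
    define \<delta> where "\<delta> = min (1/2) (\<epsilon> / (4 * (B + 1)))"
    have del: "0 < \<delta>" "\<delta> < 1" "\<delta> * B \<le> \<epsilon> / 4" 
    proof -
      show "0 < \<delta>" "\<delta> < 1" unfolding \<delta>_def using ep B0 by auto
      have "\<delta> * B \<le> \<epsilon> / (4 * (B + 1)) * B" unfolding \<delta>_def using B0 by (intro mult_right_mono) auto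
      also have "\<dots> = \<epsilon> / 4 * (B / (B + 1))" using B0 by (simp add: field_simps)
      also have "\<dots> \<le> \<epsilon> / 4" using ep B0 by (intro mult_left_le) auto
      finally show "\<delta> * B \<le> \<epsilon> / 4" .
    qed
    define \<eta> where "\<eta> = \<delta> * min \<rho> (real d - \<rho>) / 4"
    have eta: "\<eta> > 0" unfolding \<eta>_def using del rho by auto
    have "psi c \<rho> \<le> U \<eta>" unfolding psiU using Ibdd eta by (intro cInf_lower) auto
    then have "psi c \<rho> - \<epsilon>/4 < Sup (Sv c \<rho> \<eta>)" using ep unfolding U_def by linarith
    then obtain v0 where v0: "v0 \<in> Sv c \<rho> \<eta>" "v0 > psi c \<rho> - \<epsilon>/4"
      using less_cSupD[OF ne[OF eta]] by blast
    obtain N0 E0 where N0: "v0 = ln (c N0 E0) / N0" "0 < N0" "1 \<le> c N0 E0"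
        "\<bar>real E0 / real N0 - \<rho>\<bar> < \<eta>"
      using v0(1) unfolding Sv_def by blast
    have v0b: "0 \<le> v0" "v0 \<le> B" using Sv_bounds[OF bound b v0(1)] unfolding B_def by auto
    have N0dev: "\<bar>real E0 - \<rho> * N0\<bar> \<le> \<eta> * N0"
    proof -
      have "\<bar>real E0 - \<rho> * N0\<bar> = \<bar>real E0 / real N0 - \<rho>\<bar> * N0" using N0(2)
        by (intro abs_dev) simp
      also have "\<dots> \<le> \<eta> * N0" using N0(4) by (intro mult_right_mono) auto
      finally show ?thesis .
    qed
    show "eventually (\<lambda>x. a < ln (c (Nf x) (Ef x)) / Nf x) F"
      using Rev[OF eta] Nev[of "4 / (\<rho> * \<delta>)"] Nev[of "8 * N0 * B / \<epsilon> + 1"]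
    proof eventually_elim
      case (elim x)
      let ?N = "Nf x" and ?E = "Ef x"
      have Np: "real ?N > 0" using elim(3) ep B0 N0(2)
        by (smt (verit, del_insts) divide_nonneg_pos mult_nonneg_nonneg of_nat_0_le_iff)
      have dev: "\<bar>real ?E - \<rho> * ?N\<bar> \<le> \<eta> * ?N"
      proof -
        have "\<bar>real ?E - \<rho> * ?N\<bar> = \<bar>real ?E / real ?N - \<rho>\<bar> * ?N" using Np
          by (intro abs_dev) simp
        also have "\<dots> \<le> \<eta> * ?N" using elim(1) Np by (intro mult_right_mono) auto
        finally show ?thesis .
      qed
      have step: "ln (c ?N ?E) \<ge> real (nat \<lfloor>(1-\<delta>)*?N/N0\<rfloor>) * ln (c N0 E0)"
        by (rule K_step[OF super pos rho del(1,2) \<eta>_def N0(2) N0dev N0(3) elim(2) dev])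
      define X where "X = (1-\<delta>)*?N/N0"
      have X0: "X \<ge> 0" unfolding X_def using del by simp
      have sX: "real (nat \<lfloor>X\<rfloor>) > X - 1" using nat_floor_bounds(2)[OF X0] .
      have lc0: "ln (c N0 E0) = v0 * N0" unfolding N0(1) using N0(2) by simp
      have "(X - 1) * (v0 * N0) \<le> real (nat \<lfloor>X\<rfloor>) * (v0 * N0)"
        using sX v0b N0(2) by (intro mult_right_mono) auto
      then have "(X - 1) * (v0 * N0) \<le> ln (c ?N ?E)" using step[unfolded lc0] unfolding X_def by linarith
      then have lb: "(X - 1) * (v0 * N0) / ?N \<le> ln (c ?N ?E) / ?N" using Np by (intro divide_right_mono) auto
      have eq: "(X - 1) * (v0 * N0) / ?N = (1-\<delta>) * v0 - v0 * N0 / ?N"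
        unfolding X_def using Np N0(2) by (simp add: field_simps)
      have t1: "\<delta> * v0 \<le> \<epsilon> / 4" using del(3) v0b del(1) by (smt (verit) mult_left_mono)
      have t2: "v0 * N0 / ?N \<le> \<epsilon> / 8"
      proof -
        have "v0 * N0 \<le> B * N0" using v0b by (intro mult_right_mono) auto
        also have "B * N0 \<le> \<epsilon> / 8 * ?N"
        proof -
          have "8 * N0 * B / \<epsilon> \<le> ?N" using elim(3) by linarith
          then have "8 * N0 * B \<le> ?N * \<epsilon>" using ep by (simp add: divide_le_eq)
          then show ?thesis by (simp add: algebra_simps)
        qed
        finally show ?thesis using Np by (simp add: divide_le_eq)
      qed
      have "a < (1-\<delta>) * v0 - v0 * N0 / ?N"
      proof -
        have "(1-\<delta>) * v0 = v0 - \<delta> * v0" by (simp add: algebra_simps)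
        then show ?thesis using t1 t2 v0(2) ep \<epsilon>_def by linarith
      qed
      then show ?case using lb eq by linarith
    qed
  qed
qed


definition good :: "nat \<Rightarrow> nat \<Rightarrow> nat set \<Rightarrow> bool" where
  "good r K T \<longleftrightarrow> (\<forall>c<K. card {j\<in>T. j div r = c} \<noteq> 1)"

definition Tset :: "nat \<Rightarrow> nat \<Rightarrow> nat \<Rightarrow> nat set set" where
  "Tset r K e = {T. T \<subseteq> {..<r*K} \<and> card T = e \<and> good r K T}"

definition Tc :: "nat \<Rightarrow> nat \<Rightarrow> nat \<Rightarrow> nat" where
  "Tc r K e = card (Tset r K e)"

lemma finite_Tset: "finite (Tset r K e)"
  unfolding Tset_def by (rule finite_subset[of _ "Pow {..<r*K}"]) auto

lemma Tc_le_choose: "Tc r K e \<le> (r*K) choose e"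
proof -
  have "Tset r K e \<subseteq> {T. T \<subseteq> {..<r*K} \<and> card T = e}" unfolding Tset_def by auto
  then have "Tc r K e \<le> card {T. T \<subseteq> {..<r*K} \<and> card T = e}" unfolding Tc_def
    by (intro card_mono) (auto intro: finite_subset[of _ "Pow {..<r*K}"])
  also have "\<dots> = (r*K) choose e" by (subst n_subsets) auto
  finally show ?thesis .
qed

lemma Tc_le_pow: "real (Tc r K e) \<le> (2 ^ r) ^ K"
proof -
  have "Tc r K e \<le> 2 ^ (r*K)" using Tc_le_choose[of r K e] binomial_le_pow2[of "r*K" e] by linarith
  then have "real (Tc r K e) \<le> 2 ^ (r*K)" by (metis of_nat_le_iff of_nat_numeral of_nat_power)
  then show ?thesis by (simp add: power_mult)
qed

lemma shift_parts:
  fixes a :: nat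
  assumes T1: "T1 \<subseteq> {..<a}"
  shows "(T1 \<union> (\<lambda>j. j + a) ` T2) \<inter> {..<a} = T1"
    and "(\<lambda>j. j - a) ` ((T1 \<union> (\<lambda>j. j + a) ` T2) - {..<a}) = T2"
proof -
  show "(T1 \<union> (\<lambda>j. j + a) ` T2) \<inter> {..<a} = T1" using T1 by auto
  have "(T1 \<union> (\<lambda>j. j + a) ` T2) - {..<a} = (\<lambda>j. j + a) ` T2" using T1 by auto
  then show "(\<lambda>j. j - a) ` ((T1 \<union> (\<lambda>j. j + a) ` T2) - {..<a}) = T2"
    by (simp add: image_image)
qed

lemma Tc_super:
  assumes r: "r > 0"
  shows "Tc r K1 e1 * Tc r K2 e2 \<le> Tc r (K1+K2) (e1+e2)"
proof -
  define f where "f = (\<lambda>(T1, T2). T1 \<union> (\<lambda>j. j + r*K1) ` (T2::nat set))"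
  have inj: "inj_on f (Tset r K1 e1 \<times> Tset r K2 e2)"
  proof (rule inj_onI)
    fix x y assume x: "x \<in> Tset r K1 e1 \<times> Tset r K2 e2" and y: "y \<in> Tset r K1 e1 \<times> Tset r K2 e2"
      and eq: "f x = f y"
    obtain a1 a2 where xa: "x = (a1, a2)" by force
    obtain b1 b2 where yb: "y = (b1, b2)" by force
    have a1: "a1 \<subseteq> {..<r*K1}" and b1: "b1 \<subseteq> {..<r*K1}" using x y xa yb unfolding Tset_def by auto
    have e: "a1 \<union> (\<lambda>j. j + r*K1) ` a2 = b1 \<union> (\<lambda>j. j + r*K1) ` b2" using eq xa yb unfolding f_def by simp
    have "a1 = b1" using shift_parts(1)[OF a1, of a2] shift_parts(1)[OF b1, of b2] e by simp
    moreover have "a2 = b2" using shift_parts(2)[OF a1, of a2] shift_parts(2)[OF b1, of b2] e by simp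
    ultimately show "x = y" using xa yb by simp
  qed
  have sub: "f ` (Tset r K1 e1 \<times> Tset r K2 e2) \<subseteq> Tset r (K1+K2) (e1+e2)"
  proof
    fix z assume "z \<in> f ` (Tset r K1 e1 \<times> Tset r K2 e2)"
    then obtain T1 T2 where T: "T1 \<in> Tset r K1 e1" "T2 \<in> Tset r K2 e2" and z: "z = f (T1, T2)" by auto
    let ?S = "(\<lambda>j. j + r*K1) ` T2"
    have T1s: "T1 \<subseteq> {..<r*K1}" "card T1 = e1" "good r K1 T1" using T(1) unfolding Tset_def by auto
    have T2s: "T2 \<subseteq> {..<r*K2}" "card T2 = e2" "good r K2 T2" using T(2) unfolding Tset_def by auto
    have zz: "z = T1 \<union> ?S" unfolding z f_def by simp
    have fin2: "finite T2" using T2s(1) finite_subset by blast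
    have fin1: "finite T1" using T1s(1) finite_subset by blast
    have "z \<subseteq> {..<r*(K1+K2)}" unfolding zz using T1s(1) T2s(1) by (auto simp: algebra_simps)
    moreover have "card z = e1 + e2"
    proof -
      have disj: "T1 \<inter> ?S = {}" using T1s(1) by auto
      have "card ?S = e2" using T2s(2) by (subst card_image) (auto simp: inj_on_def)
      then show ?thesis unfolding zz using card_Un_disjoint[OF fin1 _ disj] fin2 T1s(2) by simp
    qed
    moreover have "good r (K1+K2) z"
      unfolding good_def
    proof (intro allI impI)
      fix c assume c: "c < K1 + K2"
      show "card {j \<in> z. j div r = c} \<noteq> 1"
      proof (cases "c < K1")
        case True
        have "{j \<in> z. j div r = c} = {j \<in> T1. j div r = c}"
        proof -
          have "\<And>j. j \<in> ?S \<Longrightarrow> j div r \<ge> K1"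
          proof -
            fix j assume "j \<in> ?S"
            then obtain i where "j = i + r*K1" by auto
            then have "j div r = i div r + K1" using r by simp
            then show "j div r \<ge> K1" by simp
          qed
          then show ?thesis unfolding zz using True by force
        qed
        then show ?thesis using T1s(3) True unfolding good_def by simp
      next
        case False
        have "{j \<in> z. j div r = c} = (\<lambda>j. j + r*K1) ` {j \<in> T2. j div r = c - K1}"
        proof -
          have a: "\<And>j. j \<in> T1 \<Longrightarrow> j div r < K1"
            using T1s(1) r by (auto simp: div_less_iff_less_mult mult.commute)
          have b: "\<And>i. (i + r*K1) div r = i div r + K1" using r by simp
          show ?thesis unfolding zz using a b False by force
        qed
        moreover have "card ((\<lambda>j. j + r*K1) ` {j \<in> T2. j div r = c - K1}) = card {j \<in> T2. j div r = c - K1}"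
          by (subst card_image) (auto simp: inj_on_def)
        moreover have "c - K1 < K2" using c False by simp
        ultimately show ?thesis using T2s(3) unfolding good_def by simp
      qed
    qed
    ultimately show "z \<in> Tset r (K1+K2) (e1+e2)" unfolding Tset_def by simp
  qed
  have "Tc r K1 e1 * Tc r K2 e2 = card (Tset r K1 e1 \<times> Tset r K2 e2)"
    unfolding Tc_def by (simp add: card_cartesian_product)
  also have "\<dots> = card (f ` (Tset r K1 e1 \<times> Tset r K2 e2))" using inj by (simp add: card_image)
  also have "\<dots> \<le> Tc r (K1+K2) (e1+e2)" unfolding Tc_def using sub finite_Tset by (intro card_mono) auto
  finally show ?thesis .
qed

lemma Tc_one_block:
  assumes "e \<le> r" "e \<noteq> 1"
  shows "Tc r 1 e \<ge> 1"
proof -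
  have "{..<e} \<in> Tset r 1 e"
  proof -
    have "\<And>j. j < e \<Longrightarrow> j div r = 0" using assms(1) by (simp add: div_less)
    then have "{j \<in> {..<e}. j div r = 0} = {..<e}" by blast
    then show ?thesis unfolding Tset_def good_def using assms by auto
  qed
  then have "Tset r 1 e \<noteq> {}" by blast
  then show ?thesis unfolding Tc_def using finite_Tset
    by (simp add: Suc_leI card_gt_0_iff)
qed

lemma one_le_prod: fixes a b c :: nat
  assumes "1 \<le> a" "1 \<le> b" "a * b \<le> c" shows "1 \<le> c"
proof -
  have "1 * 1 \<le> a * b" using assms(1,2) by (rule mult_le_mono)
  then show ?thesis using assms(3) by linarith
qed

lemma Tc_pos:
  assumes r: "r \<ge> 3"
  shows "e = 0 \<or> 2 \<le> e \<Longrightarrow> e \<le> r*K \<Longrightarrow> Tc r K e \<ge> 1"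
proof (induction K arbitrary: e)
  case 0
  then have "e = 0" by simp
  then have "{} \<in> Tset r 0 e" unfolding Tset_def good_def by simp
  then have "Tset r 0 e \<noteq> {}" by blast
  then show ?case unfolding Tc_def using finite_Tset by (simp add: Suc_leI card_gt_0_iff)
next
  case (Suc K)
  have rp: "r > 0" using r by simp
  have sup: "\<And>e1 e2. Tc r K e1 * Tc r 1 e2 \<le> Tc r (Suc K) (e1+e2)"
    using Tc_super[OF rp, of K _ 1] by simp
  show ?case
  proof (cases "e \<le> r*K")
    case True
    have "Tc r K e \<ge> 1" using Suc.IH[OF Suc.prems(1) True] .
    moreover have "Tc r 1 0 \<ge> 1" by (rule Tc_one_block) auto
    ultimately have "1 \<le> Tc r (Suc K) (e + 0)" by (rule one_le_prod[OF _ _ sup[of e 0]])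
    then show ?thesis by simp
  next
    case False
    define e2 where "e2 = e - r*K"
    have e2r: "e2 \<le> r" using Suc.prems(2) unfolding e2_def by simp
    show ?thesis
    proof (cases "e2 = 1")
      case False
      have "Tc r K (r*K) \<ge> 1"
      proof (rule Suc.IH)
        show "r*K = 0 \<or> 2 \<le> r*K"
        proof (cases "K = 0")
          case False
          then have "1 \<le> K" by simp
          then have "r*1 \<le> r*K" by (rule mult_le_mono2)
          then show ?thesis using r by linarith
        qed simp
      qed simp
      moreover have "Tc r 1 e2 \<ge> 1" using e2r False by (rule Tc_one_block)
      moreover have "r*K + e2 = e" unfolding e2_def using \<open>\<not> e \<le> r*K\<close> by simp
      ultimately show ?thesis using one_le_prod[OF _ _ sup[of "r*K" e2]] by metis
    next
      case True
      have K: "K \<ge> 1" using True Suc.prems(1) \<open>\<not> e \<le> r*K\<close> unfolding e2_def by (cases K) auto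
      have "Tc r K (r*K - 1) \<ge> 1"
      proof (rule Suc.IH)
        have "r*1 \<le> r*K" using K by (rule mult_le_mono2)
        then show "r*K - 1 = 0 \<or> 2 \<le> r*K - 1" using r by linarith
      qed simp
      moreover have "Tc r 1 2 \<ge> 1" using r by (intro Tc_one_block) auto
      moreover have "(r*K - 1) + 2 = e"
      proof -
        have "r*1 \<le> r*K" using K by (rule mult_le_mono2)
        then show ?thesis using True r \<open>\<not> e \<le> r*K\<close> unfolding e2_def by linarith
      qed
      ultimately show ?thesis using one_le_prod[OF _ _ sup[of "r*K - 1" 2]] by metis
    qed
  qed
qed


lemma perm_exists:
  assumes U: "finite U" and T: "T \<subseteq> U" "T' \<subseteq> U" and c: "card T = card T'"
  shows "\<exists>\<sigma>. \<sigma> permutes U \<and> \<sigma> ` T = T'"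
proof -
  have fT: "finite T" "finite T'" using U T finite_subset by auto
  obtain f where f: "bij_betw f T T'" using finite_same_card_bij[OF fT c] by blast
  have c2: "card (U - T) = card (U - T')" using c T U fT by (simp add: card_Diff_subset)
  obtain g where g: "bij_betw g (U - T) (U - T')"
    using finite_same_card_bij[OF _ _ c2] U by blast
  define \<sigma> where "\<sigma> = (\<lambda>x. if x \<in> T then f x else if x \<in> U then g x else x)"
  have b1: "bij_betw \<sigma> T T'" using f by (subst bij_betw_cong[of _ _ f]) (auto simp: \<sigma>_def)
  have b2: "bij_betw \<sigma> (U - T) (U - T')" using g by (subst bij_betw_cong[of _ _ g]) (auto simp: \<sigma>_def)
  have "bij_betw \<sigma> (T \<union> (U - T)) (T' \<union> (U - T'))" by (rule bij_betw_combine[OF b1 b2]) auto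
  moreover have "T \<union> (U - T) = U" "T' \<union> (U - T') = U" using T by auto
  ultimately have "bij_betw \<sigma> U U" by simp
  then have "\<sigma> permutes U" by (rule bij_imp_permutes) (use T in \<open>auto simp: \<sigma>_def\<close>)
  moreover have "\<sigma> ` T = T'" using b1 by (simp add: bij_betw_def)
  ultimately show ?thesis by blast
qed

definition fiber :: "nat \<Rightarrow> nat set \<Rightarrow> nat set \<Rightarrow> (nat \<Rightarrow> nat) set" where
  "fiber M V T = {p. p permutes {..<M} \<and> p ` V = T}"

lemma finite_fiber: "finite (fiber M V T)"
  unfolding fiber_def by (rule finite_subset[OF _ finite_permutations[of "{..<M}"]]) auto

lemma fiber_le:
  assumes T: "T \<subseteq> {..<M}" "T' \<subseteq> {..<M}" "card T = card T'"
  shows "card (fiber M V T) \<le> card (fiber M V T')"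
proof -
  obtain \<sigma> where s: "\<sigma> permutes {..<M}" "\<sigma> ` T = T'" using perm_exists[OF _ T] by auto
  have inj: "inj_on (\<lambda>p. \<sigma> \<circ> p) (fiber M V T)"
  proof (rule inj_onI)
    fix p q :: "nat \<Rightarrow> nat" assume "\<sigma> \<circ> p = \<sigma> \<circ> q"
    then show "p = q" using permutes_inj[OF s(1)] by (metis fun.inj_map_strong inj_eq)
  qed
  have "(\<lambda>p. \<sigma> \<circ> p) ` fiber M V T \<subseteq> fiber M V T'"
    unfolding fiber_def using s by (auto intro: permutes_compose simp: image_comp[symmetric])
  then show ?thesis by (rule card_inj_on_le[OF inj _ finite_fiber])
qed

lemma fiber_eq:
  assumes T: "T \<subseteq> {..<M}" "T' \<subseteq> {..<M}" "card T = card T'"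
  shows "card (fiber M V T) = card (fiber M V T')"
  using fiber_le[OF T, of V] fiber_le[OF T(2,1) T(3)[symmetric], of V] by simp

lemma count_good:
  assumes V: "V \<subseteq> {..<M}" "card V = e"
  shows "card {p. p permutes {..<M} \<and> G (p ` V)} * (M choose e)
       = card {T. T \<subseteq> {..<M} \<and> card T = e \<and> G T} * fact M"
proof -
  define Ts where "Ts = {T. T \<subseteq> {..<M} \<and> card T = e}"
  define h where "h = card (fiber M V V)"
  have finTs: "finite Ts" unfolding Ts_def by (rule finite_subset[of _ "Pow {..<M}"]) auto
  have fibh: "\<And>T. T \<in> Ts \<Longrightarrow> card (fiber M V T) = h"
    unfolding h_def Ts_def using V by (intro fiber_eq) auto
  have img: "\<And>p. p permutes {..<M} \<Longrightarrow> p ` V \<in> Ts"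
  proof -
    fix p assume p: "p permutes {..<M}"
    have "p ` V \<subseteq> {..<M}" using V permutes_image[OF p] by blast
    moreover have "card (p ` V) = e" using V permutes_inj[OF p] by (simp add: card_image inj_on_subset)
    ultimately show "p ` V \<in> Ts" unfolding Ts_def by simp
  qed
  have disj: "\<forall>i\<in>X. \<forall>j\<in>X. i \<noteq> j \<longrightarrow> fiber M V i \<inter> fiber M V j = {}" for X
    unfolding fiber_def by auto
  have cardU: "\<And>X. X \<subseteq> Ts \<Longrightarrow> card (\<Union> (fiber M V ` X)) = card X * h"
  proof -
    fix X assume X: "X \<subseteq> Ts"
    have fX: "finite X" using X finTs finite_subset by blast
    have "card (\<Union> (fiber M V ` X)) = (\<Sum>T\<in>X. card (fiber M V T))"
      by (rule card_UN_disjoint[OF fX]) (auto simp: finite_fiber disj)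
    also have "\<dots> = (\<Sum>T\<in>X. h)" using X fibh by (intro sum.cong) auto
    finally show "card (\<Union> (fiber M V ` X)) = card X * h" by simp
  qed
  have A: "{p. p permutes {..<M} \<and> G (p ` V)} = \<Union> (fiber M V ` {T\<in>Ts. G T})"
    unfolding fiber_def using img by auto
  have P: "{p. p permutes {..<M}} = \<Union> (fiber M V ` Ts)"
    unfolding fiber_def using img by auto
  have cTs: "card Ts = M choose e" unfolding Ts_def by (subst n_subsets) auto
  have "fact M = card {p. p permutes {..<M}}" by (simp add: card_permutations)
  also have "\<dots> = (M choose e) * h" unfolding P using cardU[of Ts] cTs by simp
  finally have fM: "fact M = (M choose e) * h" .
  have "card {p. p permutes {..<M} \<and> G (p ` V)} = card {T\<in>Ts. G T} * h"
    unfolding A by (rule cardU) auto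
  moreover have "{T\<in>Ts. G T} = {T. T \<subseteq> {..<M} \<and> card T = e \<and> G T}" unfolding Ts_def by auto
  ultimately show ?thesis using fM by (simp add: algebra_simps)
qed


definition Vset :: "nat \<Rightarrow> nat \<Rightarrow> nat set \<Rightarrow> nat set" where
  "Vset l n S = {k \<in> {..<l*n}. k div l \<in> S}"

lemma Vset_sub: "Vset l n S \<subseteq> {..<l*n}" unfolding Vset_def by auto

lemma card_Vset:
  assumes l: "l > 0" and S: "S \<subseteq> {..<n}"
  shows "card (Vset l n S) = l * card S"
proof -
  define g where "g = (\<lambda>(s::nat, i::nat). s * l + i)"
  have eq: "Vset l n S = g ` (S \<times> {..<l})"
  proof
    show "Vset l n S \<subseteq> g ` (S \<times> {..<l})"
    proof
      fix k assume k: "k \<in> Vset l n S"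
      have "k = g (k div l, k mod l)" unfolding g_def by simp
      moreover have "(k div l, k mod l) \<in> S \<times> {..<l}" using k l unfolding Vset_def by auto
      ultimately show "k \<in> g ` (S \<times> {..<l})" by blast
    qed
  next
    show "g ` (S \<times> {..<l}) \<subseteq> Vset l n S"
    proof
      fix k assume "k \<in> g ` (S \<times> {..<l})"
      then obtain s i where si: "s \<in> S" "i < l" "k = s * l + i" unfolding g_def by auto
      have "s < n" using si S by auto
      then have "s * l + l \<le> l * n" by (metis Suc_leI add.commute mult.commute mult_Suc_right mult_le_mono2)
      then have "k < l * n" using si by linarith
      moreover have "k div l = s" using si l by simp
      ultimately show "k \<in> Vset l n S" unfolding Vset_def using si by simp
    qed
  qed
  have inj: "inj_on g (S \<times> {..<l})"
  proof (rule inj_onI)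
    fix x y assume x: "x \<in> S \<times> {..<l}" and y: "y \<in> S \<times> {..<l}" and e: "g x = g y"
    obtain s i where xs: "x = (s, i)" "i < l" using x by auto
    obtain t j where yt: "y = (t, j)" "j < l" using y by auto
    have "s * l + i = t * l + j" using e xs yt unfolding g_def by simp
    then have "(s * l + i) div l = (t * l + j) div l" "(s * l + i) mod l = (t * l + j) mod l" by simp_all
    then have "s = t" "i = j" using xs yt l by simp_all
    then show "x = y" using xs yt by simp
  qed
  have "finite S" using S finite_subset by blast
  then show ?thesis unfolding eq using card_image[OF inj] by (simp add: card_cartesian_product)
qed

lemma edges_to_img:
  assumes p: "inj p"
  shows "edges_to l r n p S c = card {j \<in> p ` Vset l n S. j div r = c}"
proof -
  have "{j \<in> p ` Vset l n S. j div r = c} = p ` {k \<in> {..<l*n}. k div l \<in> S \<and> p k div r = c}"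
    unfolding Vset_def by auto
  then show ?thesis unfolding edges_to_def using p by (simp add: card_image inj_on_subset)
qed

lemma cond_good:
  assumes p: "p permutes {..<l*n}"
  shows "(\<forall>c < l*n div r. edges_to l r n p S c \<noteq> 1) \<longleftrightarrow> good r (l*n div r) (p ` Vset l n S)"
  unfolding good_def using edges_to_img[OF permutes_inj[OF p]] by simp

lemma count_S:
  assumes l: "l > 0" and r: "r > 0" and dvd: "r dvd l*n" and S: "S \<subseteq> {..<n}"
  shows "card {p \<in> socket_perms (l*n). \<forall>c < l*n div r. edges_to l r n p S c \<noteq> 1} * ((l*n) choose (l * card S))
       = Tc r (l*n div r) (l * card S) * fact (l*n)"
proof -
  let ?M = "l*n" and ?K = "l*n div r" and ?e = "l * card S"
  have rK: "r * ?K = ?M" using dvd by simp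
  have "{p \<in> socket_perms ?M. \<forall>c < ?K. edges_to l r n p S c \<noteq> 1}
      = {p. p permutes {..<?M} \<and> good r ?K (p ` Vset l n S)}"
    unfolding socket_perms_def using cond_good by blast
  moreover have "card {p. p permutes {..<?M} \<and> good r ?K (p ` Vset l n S)} * (?M choose ?e)
      = card {T. T \<subseteq> {..<?M} \<and> card T = ?e \<and> good r ?K T} * fact ?M"
    by (rule count_good[OF Vset_sub card_Vset[OF l S]])
  moreover have "{T. T \<subseteq> {..<?M} \<and> card T = ?e \<and> good r ?K T} = Tset r ?K ?e"
    unfolding Tset_def rK by simp
  ultimately show ?thesis unfolding Tc_def by simp
qed

lemma card_filter_sum:
  assumes "finite A"
  shows "real (card {x\<in>A. P x}) = (\<Sum>x\<in>A. if P x then 1 else 0)"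
proof -
  have "(\<Sum>x\<in>A. if P x then 1 else (0::real)) = (\<Sum>x\<in>{x\<in>A. P x}. 1)"
    using assms by (simp add: sum.If_cases Int_def)
  then show ?thesis by simp
qed

lemma sum_card_swap:
  assumes "finite A" "finite B"
  shows "(\<Sum>a\<in>A. real (card {b\<in>B. Q a b})) = (\<Sum>b\<in>B. real (card {a\<in>A. Q a b}))"
  using assms by (simp add: card_filter_sum sum.swap[of _ A B])

lemma finite_socket_perms: "finite (socket_perms m)"
  unfolding socket_perms_def by (rule finite_permutations) simp

lemma card_socket_perms: "card (socket_perms m) = fact m"
  unfolding socket_perms_def by (simp add: card_permutations)

definition Sm :: "nat \<Rightarrow> nat \<Rightarrow> nat set set" where
  "Sm n m = {S. S \<subseteq> {..<n} \<and> card S = m}"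

lemma finite_Sm: "finite (Sm n m)" unfolding Sm_def by (rule finite_subset[of _ "Pow {..<n}"]) auto
lemma card_Sm: "card (Sm n m) = n choose m" unfolding Sm_def by (subst n_subsets) auto

lemma mult_eq_div: "c \<noteq> 0 \<Longrightarrow> a * c = b \<Longrightarrow> a = b / (c::real)"
  by (simp add: field_simps)

lemma count_S_real:
  assumes l: "l > 0" and r: "r > 0" and dvd: "r dvd l*n" and S: "S \<in> Sm n m" and m: "m \<le> n"
  shows "real (card {p \<in> socket_perms (l*n). \<forall>c < l*n div r. edges_to l r n p S c \<noteq> 1})
       = real (Tc r (l*n div r) (l * m)) * fact (l*n) / real ((l*n) choose (l * m))"
proof -
  have Ss: "S \<subseteq> {..<n}" "card S = m" using S unfolding Sm_def by auto
  have pos: "((l*n) choose (l * m)) > 0" using m by (simp add: zero_less_binomial_iff)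
  have "real (card {p \<in> socket_perms (l*n). \<forall>c < l*n div r. edges_to l r n p S c \<noteq> 1}) * real ((l*n) choose (l * m))
      = real (Tc r (l*n div r) (l * m)) * fact (l*n)"
  proof -
    have e: "card {p \<in> socket_perms (l*n). \<forall>c < l*n div r. edges_to l r n p S c \<noteq> 1} * ((l*n) choose (l * m))
       = Tc r (l*n div r) (l * m) * fact (l*n)" using count_S[OF l r dvd Ss(1)] Ss(2) by simp
    show ?thesis using arg_cong[OF e, of real] by (simp only: of_nat_mult of_nat_fact)
  qed
  moreover have "real ((l*n) choose (l * m)) \<noteq> 0" using pos by (metis of_nat_0_less_iff less_irrefl)
  ultimately show ?thesis by (intro mult_eq_div) auto
qed

lemma avg_N1_formula:
  assumes l: "l > 0" and r: "r > 0" and dvd: "r dvd l*n" and m: "m \<le> n"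
  shows "avg_N1 l r n m = real (n choose m) * real (Tc r (l*n div r) (l * m)) / real ((l*n) choose (l * m))"
proof -
  let ?P = "socket_perms (l*n)"
  let ?Q = "\<lambda>p S. \<forall>c < l*n div r. edges_to l r n p S c \<noteq> 1"
  have set_eq: "\<And>p. {S. stopping1 l r n p S \<and> card S = m} = {S \<in> Sm n m. ?Q p S}"
    unfolding stopping1_def Sm_def by auto
  have "(\<Sum>p\<in>?P. real (card {S. stopping1 l r n p S \<and> card S = m}))
      = (\<Sum>p\<in>?P. real (card {S \<in> Sm n m. ?Q p S}))" using set_eq by simp
  also have "\<dots> = (\<Sum>S\<in>Sm n m. real (card {p \<in> ?P. ?Q p S}))"
    by (rule sum_card_swap[OF finite_socket_perms finite_Sm])
  also have "\<dots> = (\<Sum>S\<in>Sm n m. real (Tc r (l*n div r) (l * m)) * fact (l*n) / real ((l*n) choose (l * m)))"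
    using count_S_real[OF l r dvd _ m] by (intro sum.cong) auto
  also have "\<dots> = real (n choose m) * (real (Tc r (l*n div r) (l * m)) * fact (l*n) / real ((l*n) choose (l * m)))"
    by (simp add: card_Sm)
  finally have eq: "(\<Sum>p\<in>?P. real (card {S. stopping1 l r n p S \<and> card S = m})) = \<dots>" .
  show ?thesis unfolding avg_N1_def eq card_socket_perms by (simp add: field_simps)
qed

lemma avg_N2_formula:
  assumes l1: "l1 > 0" and l2: "l2 > 0" and r: "r > 0" and dvd1: "r dvd l1*n" and dvd2: "r dvd l2*n"
    and m: "m \<le> n"
  shows "avg_N2 l1 l2 r r n m = real (n choose m)
      * (real (Tc r (l1*n div r) (l1 * m)) / real ((l1*n) choose (l1 * m)))
      * (real (Tc r (l2*n div r) (l2 * m)) / real ((l2*n) choose (l2 * m)))"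
proof -
  let ?P1 = "socket_perms (l1*n)" and ?P2 = "socket_perms (l2*n)"
  let ?Q1 = "\<lambda>p S. \<forall>c < l1*n div r. edges_to l1 r n p S c \<noteq> 1"
  let ?Q2 = "\<lambda>p S. \<forall>c < l2*n div r. edges_to l2 r n p S c \<noteq> 1"
  let ?X1 = "real (Tc r (l1*n div r) (l1 * m)) * fact (l1*n) / real ((l1*n) choose (l1 * m))"
  let ?X2 = "real (Tc r (l2*n div r) (l2 * m)) * fact (l2*n) / real ((l2*n) choose (l2 * m))"
  have set_eq: "\<And>x. {S. stopping2 l1 l2 r r n (fst x) (snd x) S \<and> card S = m}
     = {S \<in> Sm n m. ?Q1 (fst x) S \<and> ?Q2 (snd x) S}"
    unfolding stopping2_def Sm_def by auto
  have fin: "finite (?P1 \<times> ?P2)" using finite_socket_perms by simp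
  have "(\<Sum>(p1,p2)\<in>?P1 \<times> ?P2. real (card {S. stopping2 l1 l2 r r n p1 p2 S \<and> card S = m}))
      = (\<Sum>x\<in>?P1 \<times> ?P2. real (card {S \<in> Sm n m. ?Q1 (fst x) S \<and> ?Q2 (snd x) S}))"
    using set_eq by (simp add: case_prod_beta)
  also have "\<dots> = (\<Sum>S\<in>Sm n m. real (card {x \<in> ?P1 \<times> ?P2. ?Q1 (fst x) S \<and> ?Q2 (snd x) S}))"
    by (rule sum_card_swap[OF fin finite_Sm])
  also have "\<dots> = (\<Sum>S\<in>Sm n m. ?X1 * ?X2)"
  proof (intro sum.cong refl)
    fix S assume S: "S \<in> Sm n m"
    have "{x \<in> ?P1 \<times> ?P2. ?Q1 (fst x) S \<and> ?Q2 (snd x) S} = {p \<in> ?P1. ?Q1 p S} \<times> {p \<in> ?P2. ?Q2 p S}"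
      by auto
    then have "real (card {x \<in> ?P1 \<times> ?P2. ?Q1 (fst x) S \<and> ?Q2 (snd x) S})
       = real (card {p \<in> ?P1. ?Q1 p S}) * real (card {p \<in> ?P2. ?Q2 p S})"
      by (simp add: card_cartesian_product)
    also have "\<dots> = ?X1 * ?X2" using count_S_real[OF l1 r dvd1 S m] count_S_real[OF l2 r dvd2 S m] by simp
    finally show "real (card {x \<in> ?P1 \<times> ?P2. ?Q1 (fst x) S \<and> ?Q2 (snd x) S}) = ?X1 * ?X2" .
  qed
  also have "\<dots> = real (n choose m) * (?X1 * ?X2)" by (simp add: card_Sm)
  finally have eq: "(\<Sum>(p1,p2)\<in>?P1 \<times> ?P2. real (card {S. stopping2 l1 l2 r r n p1 p2 S \<and> card S = m})) = \<dots>" .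
  show ?thesis unfolding avg_N2_def eq card_socket_perms by (simp add: field_simps)
qed


definition mm :: "real \<Rightarrow> nat \<Rightarrow> nat" where "mm \<omega> n = nat \<lfloor>\<omega> * real n\<rfloor>"

lemma mm_bounds:
  assumes "\<omega> > 0"
  shows "real (mm \<omega> n) \<le> \<omega> * n" "real (mm \<omega> n) > \<omega> * n - 1"
  unfolding mm_def using nat_floor_bounds[of "\<omega> * n"] assms by auto

lemma mm_ratio:
  assumes w: "\<omega> > 0"
  shows "((\<lambda>n. real (mm \<omega> n) / real n) \<longlongrightarrow> \<omega>) at_top"
proof (rule tendsto_sandwich[of "\<lambda>n. \<omega> - 1 / real n" _ _ "\<lambda>n. \<omega>"])
  show "eventually (\<lambda>n. \<omega> - 1 / real n \<le> real (mm \<omega> n) / real n) at_top"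
    using eventually_gt_at_top[of 0]
  proof eventually_elim
    case (elim n)
    have "(\<omega> * n - 1) / n \<le> real (mm \<omega> n) / n" using mm_bounds(2)[OF w, of n] elim
      by (intro divide_right_mono) auto
    moreover have "(\<omega> * n - 1) / n = \<omega> - 1 / real n" using elim by (simp add: field_simps)
    ultimately show ?case by simp
  qed
  show "eventually (\<lambda>n. real (mm \<omega> n) / real n \<le> \<omega>) at_top"
    using eventually_gt_at_top[of 0]
  proof eventually_elim
    case (elim n)
    have "real (mm \<omega> n) / n \<le> (\<omega> * n) / n" using mm_bounds(1)[OF w, of n] elim
      by (intro divide_right_mono) auto
    then show ?case using elim by simp
  qed
  show "((\<lambda>n. \<omega> - 1 / real n) \<longlongrightarrow> \<omega>) at_top"
    using tendsto_diff[OF tendsto_const[of \<omega>] lim_const_over_n[of "1::real"]] by simp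
qed (simp)

lemma choose_super: "(N1 choose E1) * (N2 choose E2) \<le> (N1 + N2) choose (E1 + E2)"
proof -
  have "(N1 choose E1) * (N2 choose (E1 + E2 - E1)) \<le> (\<Sum>k\<le>E1+E2. (N1 choose k) * (N2 choose (E1 + E2 - k)))"
    by (rule member_le_sum) auto
  then show ?thesis using vandermonde[of N1 N2 "E1+E2"] by simp
qed

lemma choose_pos: "E = 0 \<or> 2 \<le> E \<Longrightarrow> E \<le> 1 * N \<Longrightarrow> (N choose E) \<ge> 1"
  by (simp add: Suc_leI zero_less_binomial_iff)

lemma choose_bound: "real (N choose E) \<le> 2 ^ N"
  using binomial_le_pow2[of N E] by (metis of_nat_le_iff of_nat_numeral of_nat_power)

lemma lim_B:
  fixes F :: "nat filter" and l :: nat and \<omega> :: real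
  assumes l: "l > 0" and w: "0 < \<omega>" "\<omega> < 1" and F: "F \<le> at_top"
  shows "((\<lambda>n. ln (real ((l*n) choose (l * mm \<omega> n))) / real n) \<longlongrightarrow> l * psi (\<lambda>N E. N choose E) \<omega>) F"
proof -
  have fl: "filterlim (\<lambda>n. l*n) at_top at_top"
    unfolding filterlim_at_top
  proof
    fix Z :: nat show "eventually (\<lambda>n. Z \<le> l*n) at_top"
      using eventually_ge_at_top[of Z]
    proof eventually_elim
      case (elim n)
      have "1*n \<le> l*n" by (rule mult_le_mono1) (use l in linarith)
      then show ?case using elim by linarith
    qed
  qed
  have flF: "filterlim (\<lambda>n. l*n) at_top F" using filterlim_mono[OF fl order_refl F] .
  have rat: "((\<lambda>n. real (l * mm \<omega> n) / real (l*n)) \<longlongrightarrow> \<omega>) F"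
  proof -
    have "\<And>n. real (l * mm \<omega> n) / real (l*n) = real (mm \<omega> n) / real n" using l by simp
    then show ?thesis using tendsto_mono[OF F mm_ratio[OF w(1)]] by simp
  qed
  have h: "((\<lambda>n. ln (real ((l*n) choose (l * mm \<omega> n))) / real (l*n)) \<longlongrightarrow> psi (\<lambda>N E. N choose E) \<omega>) F"
    by (rule limit_K[of "\<lambda>N E. N choose E" 1 2, OF choose_super choose_pos choose_bound _ w(1) _ flF rat]) (use w in auto)
  have eq: "\<And>n. ln (real ((l*n) choose (l * mm \<omega> n))) / real n
     = l * (ln (real ((l*n) choose (l * mm \<omega> n))) / real (l*n))" using l by simp
  show ?thesis unfolding eq by (rule tendsto_mult_left[OF h])
qed

lemma lim_T:
  fixes F :: "nat filter" and l r :: nat and \<omega> :: real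
  assumes l: "l > 0" and r: "r \<ge> 3" and w: "0 < \<omega>" "\<omega> < 1" and F: "F \<le> at_top"
    and dv: "eventually (\<lambda>n. r dvd l*n) F"
  shows "((\<lambda>n. ln (real (Tc r (l*n div r) (l * mm \<omega> n))) / real n) \<longlongrightarrow> (l/r) * psi (Tc r) (r*\<omega>)) F"
proof -
  have rp: "r > 0" using r by simp
  have fl: "filterlim (\<lambda>n. l*n div r) at_top at_top"
    unfolding filterlim_at_top
  proof
    fix Z :: nat show "eventually (\<lambda>n. Z \<le> l*n div r) at_top"
      using eventually_ge_at_top[of "r*Z"]
    proof eventually_elim
      case (elim n)
      have "1*n \<le> l*n" by (rule mult_le_mono1) (use l in linarith)
      then have "r * Z \<le> l * n" using elim by linarith
      then have "(r * Z) div r \<le> l * n div r" by (rule div_le_mono)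
      then show ?case using rp by simp
    qed
  qed
  have flF: "filterlim (\<lambda>n. l*n div r) at_top F" using filterlim_mono[OF fl order_refl F] .
  have ev: "eventually (\<lambda>n. r dvd l*n \<and> n > 0) F"
    using eventually_conj[OF dv filter_leD[OF F eventually_gt_at_top[of 0]]] .
  have Kr: "\<And>n. r dvd l*n \<Longrightarrow> real (l*n div r) = real l * real n / real r"
    using rp by (simp add: real_of_nat_div)
  have rat: "((\<lambda>n. real (l * mm \<omega> n) / real (l*n div r)) \<longlongrightarrow> r * \<omega>) F"
  proof -
    have lim: "((\<lambda>n. r * (real (mm \<omega> n) / real n)) \<longlongrightarrow> r * \<omega>) F"
      by (rule tendsto_mult_left[OF tendsto_mono[OF F mm_ratio[OF w(1)]]])
    have ev2: "eventually (\<lambda>n. r * (real (mm \<omega> n) / real n) = real (l * mm \<omega> n) / real (l*n div r)) F"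
      using ev
    proof eventually_elim
      case (elim n)
      show ?case unfolding Kr[OF conjunct1[OF elim]] using elim l rp by (simp add: field_simps)
    qed
    show ?thesis using iffD1[OF tendsto_cong[OF ev2] lim] .
  qed
  have h: "((\<lambda>n. ln (real (Tc r (l*n div r) (l * mm \<omega> n))) / real (l*n div r)) \<longlongrightarrow> psi (Tc r) (r*\<omega>)) F"
  proof (rule limit_K[of "Tc r" r "2^r", OF Tc_super[OF rp] Tc_pos[OF r] Tc_le_pow _ _ _ flF rat])
    show "1 \<le> (2::real) ^ r" by simp
    show "0 < real r * \<omega>" using w rp by simp
    show "real r * \<omega> < real r" using w rp by simp
  qed
  have ev3: "eventually (\<lambda>n. (l/r) * (ln (real (Tc r (l*n div r) (l * mm \<omega> n))) / real (l*n div r))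
          = ln (real (Tc r (l*n div r) (l * mm \<omega> n))) / real n) F"
    using ev
  proof eventually_elim
    case (elim n)
    show ?case unfolding Kr[OF conjunct1[OF elim]] using elim l rp by (simp add: field_simps)
  qed
  show ?thesis using iffD1[OF tendsto_cong[OF ev3] tendsto_mult_left[OF h, of "l/r"]] .
qed


lemma adm_le: "admissible_n l1 l2 r1 r2 \<le> at_top"
  unfolding admissible_n_def by (rule inf_le1)

lemma adm_dvd: "eventually (\<lambda>n. r1 dvd l1*n \<and> r2 dvd l2*n) (admissible_n l1 l2 r1 r2)"
  unfolding admissible_n_def eventually_inf_principal by simp

lemma mm_le: "0 < \<omega> \<Longrightarrow> \<omega> < 1 \<Longrightarrow> mm \<omega> n \<le> n"
proof -
  assume w: "0 < \<omega>" "\<omega> < 1"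
  have "real (mm \<omega> n) \<le> \<omega> * n" using mm_bounds(1)[OF w(1)] .
  also have "\<dots> \<le> n" using w by (simp add: mult_left_le_one_le)
  finally show ?thesis by simp
qed

lemma mm_ge2: "0 < \<omega> \<Longrightarrow> eventually (\<lambda>n. 2 \<le> mm \<omega> n) at_top"
proof -
  assume w: "0 < \<omega>"
  show ?thesis using eventually_ge_at_top[of "nat \<lceil>3 / \<omega>\<rceil>"]
  proof eventually_elim
    case (elim n)
    have "3 / \<omega> \<le> n" using elim real_nat_ceiling_ge[of "3/\<omega>"] by linarith
    then have "3 \<le> \<omega> * n" using w by (simp add: divide_le_eq mult.commute)
    then have "real (mm \<omega> n) > 2" using mm_bounds(2)[OF w, of n] by linarith
    then show ?case by simp
  qed
qed

lemma ln3: "a > 0 \<Longrightarrow> b > 0 \<Longrightarrow> c > 0 \<Longrightarrow> ln (a * b / c) = ln a + ln b - ln (c::real)"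
  by (simp add: ln_mult ln_div)

lemma Tc_pos_real:
  assumes r: "r \<ge> 3" and dv: "r dvd l*n" and m: "2 \<le> l*m" "m \<le> n"
  shows "real (Tc r (l*n div r) (l*m)) > 0"
proof -
  have "l*m \<le> r * (l*n div r)" using dv m by simp
  then have "Tc r (l*n div r) (l*m) \<ge> 1" using Tc_pos[OF r] m by blast
  then show ?thesis by simp
qed

lemma part1:
  fixes l1 l2 r :: nat and \<omega> :: real
  assumes l1: "l1 > 0" and l2: "l2 > 0" and r: "r \<ge> 3" and w: "0 < \<omega>" "\<omega> < 1"
  shows "\<exists>G::real.
              ((\<lambda>n. ln (avg_N2 l1 l2 r r n (nat \<lfloor>\<omega> * real n\<rfloor>)) / real n)
                 \<longlongrightarrow> G) (admissible_n l1 l2 r r)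
            \<and> ((\<lambda>n. ln (avg_N1 (l1 + l2) r n (nat \<lfloor>\<omega> * real n\<rfloor>)) / real n)
                 \<longlongrightarrow> G) (admissible_n l1 l2 r r)"
proof -
  let ?F = "admissible_n l1 l2 r r"
  let ?L = "l1 + l2"
  have rp: "r > 0" using r by simp
  have L: "?L > 0" using l1 by simp
  define pB where "pB = psi (\<lambda>N E. N choose E) \<omega>"
  define pT where "pT = psi (Tc r) (r*\<omega>)"
  define B where "B = (\<lambda>l n. ln (real ((l*n) choose (l * mm \<omega> n))) / real n)"
  define T where "T = (\<lambda>l n. ln (real (Tc r (l*n div r) (l * mm \<omega> n))) / real n)"
  have dv1: "eventually (\<lambda>n. r dvd l1*n) ?F" using adm_dvd by (rule eventually_mono) simp
  have dv2: "eventually (\<lambda>n. r dvd l2*n) ?F" using adm_dvd by (rule eventually_mono) simp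
  have dvL: "eventually (\<lambda>n. r dvd ?L*n) ?F" using adm_dvd
    by (rule eventually_mono) (simp add: add_mult_distrib)
  have limB: "\<And>l. l > 0 \<Longrightarrow> (B l \<longlongrightarrow> l * pB) ?F"
    unfolding B_def pB_def using lim_B[OF _ w adm_le] by blast
  have limT: "\<And>l. l > 0 \<Longrightarrow> eventually (\<lambda>n. r dvd l*n) ?F \<Longrightarrow> (T l \<longlongrightarrow> (l/r) * pT) ?F"
    unfolding T_def pT_def using lim_T[OF _ r w adm_le] by blast
  have ev: "eventually (\<lambda>n. r dvd l1*n \<and> r dvd l2*n \<and> 2 \<le> mm \<omega> n) ?F"
    using adm_dvd filter_leD[OF adm_le mm_ge2[OF w(1)]] by eventually_elim simp
  have limB1: "(B 1 \<longlongrightarrow> pB) ?F" using limB[of 1] by simp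
  define G where "G = pB + (?L/r) * pT - ?L * pB"
  have lim1: "((\<lambda>n. B 1 n + T ?L n - B ?L n) \<longlongrightarrow> G) ?F"
    unfolding G_def by (intro tendsto_intros limB1 limB limT dvL L)
  have lim2: "((\<lambda>n. B 1 n + T l1 n - B l1 n + (T l2 n - B l2 n)) \<longlongrightarrow> G) ?F"
  proof -
    have "((\<lambda>n. B 1 n + T l1 n - B l1 n + (T l2 n - B l2 n)) \<longlongrightarrow>
        pB + (l1/r) * pT - l1 * pB + ((l2/r) * pT - l2 * pB)) ?F"
      by (intro tendsto_intros limB1 limB limT dv1 dv2 l1 l2)
    moreover have "pB + (l1/r) * pT - l1 * pB + ((l2/r) * pT - l2 * pB) = G"
      unfolding G_def using rp by (simp add: field_simps)
    ultimately show ?thesis by simp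
  qed
  have mmdef: "\<And>n. nat \<lfloor>\<omega> * real n\<rfloor> = mm \<omega> n" unfolding mm_def by simp
  have e1: "eventually (\<lambda>n. B 1 n + T ?L n - B ?L n = ln (avg_N1 ?L r n (nat \<lfloor>\<omega> * real n\<rfloor>)) / real n) ?F"
    using ev
  proof eventually_elim
    case (elim n)
    let ?m = "mm \<omega> n"
    have dvn: "r dvd ?L * n" using elim by (simp add: add_mult_distrib)
    have mle: "?m \<le> n" using mm_le[OF w] .
    have "1 * 2 \<le> ?L * ?m" by (rule mult_le_mono) (use elim L in linarith)+
    then have Lm: "2 \<le> ?L * ?m" by simp
    have LmLn: "?L * ?m \<le> ?L * n" using mle by simp
    have p1: "real (n choose ?m) > 0" using mle by simp
    have p2: "real (Tc r (?L*n div r) (?L * ?m)) > 0" by (rule Tc_pos_real[OF r dvn Lm mle])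
    have p3: "real ((?L*n) choose (?L * ?m)) > 0" using LmLn by simp
    have "avg_N1 ?L r n ?m = real (n choose ?m) * real (Tc r (?L*n div r) (?L * ?m)) / real ((?L*n) choose (?L * ?m))"
      by (rule avg_N1_formula[OF L rp dvn mle])
    then have "ln (avg_N1 ?L r n ?m) = ln (real (n choose ?m)) + ln (real (Tc r (?L*n div r) (?L * ?m)))
               - ln (real ((?L*n) choose (?L * ?m)))" using ln3[OF p1 p2 p3] by simp
    then show ?case unfolding mmdef B_def T_def by (simp add: diff_divide_distrib add_divide_distrib)
  qed
  have e2: "eventually (\<lambda>n. B 1 n + T l1 n - B l1 n + (T l2 n - B l2 n)
        = ln (avg_N2 l1 l2 r r n (nat \<lfloor>\<omega> * real n\<rfloor>)) / real n) ?F"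
    using ev
  proof eventually_elim
    case (elim n)
    let ?m = "mm \<omega> n"
    have mle: "?m \<le> n" using mm_le[OF w] .
    have "1 * 2 \<le> l1 * ?m" by (rule mult_le_mono) (use elim l1 in linarith)+
    then have lm1: "2 \<le> l1 * ?m" by simp
    have "1 * 2 \<le> l2 * ?m" by (rule mult_le_mono) (use elim l2 in linarith)+
    then have lm2: "2 \<le> l2 * ?m" by simp
    have p1: "real (n choose ?m) > 0" using mle by simp
    have p2: "real (Tc r (l1*n div r) (l1 * ?m)) > 0" by (rule Tc_pos_real[OF r _ lm1 mle]) (use elim in simp)
    have p3: "real ((l1*n) choose (l1 * ?m)) > 0" using mle by simp
    have p4: "real (Tc r (l2*n div r) (l2 * ?m)) > 0" by (rule Tc_pos_real[OF r _ lm2 mle]) (use elim in simp)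
    have p5: "real ((l2*n) choose (l2 * ?m)) > 0" using mle by simp
    have "avg_N2 l1 l2 r r n ?m = real (n choose ?m)
      * (real (Tc r (l1*n div r) (l1 * ?m)) / real ((l1*n) choose (l1 * ?m)))
      * (real (Tc r (l2*n div r) (l2 * ?m)) / real ((l2*n) choose (l2 * ?m)))"
      by (rule avg_N2_formula[OF l1 l2 rp _ _ mle]) (use elim in simp_all)
    then have "ln (avg_N2 l1 l2 r r n ?m) = ln (real (n choose ?m))
       + (ln (real (Tc r (l1*n div r) (l1 * ?m))) - ln (real ((l1*n) choose (l1 * ?m))))
       + (ln (real (Tc r (l2*n div r) (l2 * ?m))) - ln (real ((l2*n) choose (l2 * ?m))))"
      using p1 p2 p3 p4 p5 by (simp add: ln_mult ln_div)
    then show ?case unfolding mmdef B_def T_def by (simp add: diff_divide_distrib add_divide_distrib)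
  qed
  show ?thesis
    using iffD1[OF tendsto_cong[OF e2] lim2] iffD1[OF tendsto_cong[OF e1] lim1] by blast
qed


lemma pow_le_3_fact: "real s ^ s \<le> 3 ^ s * fact s"
proof (induction s)
  case 0 then show ?case by simp
next
  case (Suc s)
  have key: "real (Suc s) ^ s \<le> 3 * real s ^ s"
  proof (cases "s = 0")
    case True then show ?thesis by simp
  next
    case False
    then have sp: "s > 0" by simp
    have "(1 + 1 / real s) ^ s \<le> exp 1" by (rule exp_ge_one_plus_x_over_n_power_n) (use sp in auto)
    also have "\<dots> \<le> 3" by (rule exp_le)
    finally have h: "(1 + 1 / real s) ^ s \<le> 3" .
    have b: "real (Suc s) = real s * (1 + 1 / real s)" using sp by (simp add: field_simps)
    have "real (Suc s) ^ s = (real s * (1 + 1 / real s)) ^ s" by (simp only: b)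
    also have "\<dots> = real s ^ s * (1 + 1 / real s) ^ s" by (simp add: power_mult_distrib)
    also have "\<dots> \<le> real s ^ s * 3" using h by (intro mult_left_mono) auto
    finally show ?thesis by simp
  qed
  have "real (Suc s) ^ Suc s = real (Suc s) * real (Suc s) ^ s" by simp
  also have "\<dots> \<le> real (Suc s) * (3 * real s ^ s)" using key by (intro mult_left_mono) auto
  also have "\<dots> \<le> real (Suc s) * (3 * (3 ^ s * fact s))" using Suc.IH by (intro mult_left_mono) auto
  also have "\<dots> = 3 ^ Suc s * fact (Suc s)" by (simp add: algebra_simps)
  finally show ?case .
qed

lemma choose_fact_prod: "real (n choose k) * fact k = (\<Prod>i = 0..<k. real n - real i)"
  by (simp add: binomial_gbinomial gbinomial_mult_fact')

lemma choose_le_pow_fact: "real (n choose k) * fact k \<le> real n ^ k"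
proof (cases "k \<le> n")
  case True
  have "(\<Prod>i = 0..<k. real n - real i) \<le> (\<Prod>i = 0..<k. real n)"
    using True by (intro prod_mono) auto
  then show ?thesis unfolding choose_fact_prod by simp
next
  case False then show ?thesis by (simp add: binomial_eq_0)
qed

lemma choose_le_3: "real (n choose k) * real k ^ k \<le> (3 * real n) ^ k"
proof -
  have "real (n choose k) * real k ^ k \<le> real (n choose k) * (3 ^ k * fact k)"
    using pow_le_3_fact[of k] by (intro mult_left_mono) auto
  also have "\<dots> = 3 ^ k * (real (n choose k) * fact k)" by (simp add: algebra_simps)
  also have "\<dots> \<le> 3 ^ k * real n ^ k" using choose_le_pow_fact[of n k] by (intro mult_left_mono) auto
  finally show ?thesis by (simp add: power_mult_distrib)
qed

lemma choose_ratio: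
  assumes AB: "A \<le> B"
  shows "real (A choose e) * real B ^ e \<le> real (B choose e) * real A ^ e"
proof (cases "e \<le> A")
  case True
  have "real (A choose e) * fact e * real B ^ e = (\<Prod>i = 0..<e. (real A - real i) * real B)"
    unfolding choose_fact_prod by (simp add: prod.distrib)
  also have "\<dots> \<le> (\<Prod>i = 0..<e. (real B - real i) * real A)"
  proof (intro prod_mono conjI)
    fix i assume i: "i \<in> {0..<e}"
    show "0 \<le> (real A - real i) * real B" using i True by auto
    have "real i * real A \<le> real i * real B" using AB by (intro mult_left_mono) auto
    then show "(real A - real i) * real B \<le> (real B - real i) * real A" by (simp add: algebra_simps)
  qed
  also have "\<dots> = real (B choose e) * fact e * real A ^ e"
    unfolding choose_fact_prod by (simp add: prod.distrib)
  finally have "fact e * (real (A choose e) * real B ^ e) \<le> fact e * (real (B choose e) * real A ^ e)"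
    by (simp add: algebra_simps)
  then show ?thesis by (rule mult_left_le_imp_le) simp
next
  case False then show ?thesis by (simp add: binomial_eq_0)
qed

lemma Tc_upper:
  assumes r: "r > 0"
  shows "Tc r K e \<le> (\<Sum>i\<le>e div 2. (K choose i) * ((r*i) choose e))"
proof -
  define Js where "Js = {J. J \<subseteq> {..<K} \<and> card J \<le> e div 2}"
  have finJs: "finite Js" unfolding Js_def by (rule finite_subset[of _ "Pow {..<K}"]) auto
  define A where "A = (\<lambda>J. {T. T \<subseteq> Vset r K J \<and> card T = e})"
  have sub: "Tset r K e \<subseteq> (\<Union>J\<in>Js. A J)"
  proof
    fix T assume T: "T \<in> Tset r K e"
    then have Ts: "T \<subseteq> {..<r*K}" "card T = e" "good r K T" unfolding Tset_def by auto
    define J where "J = (\<lambda>j. j div r) ` T"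
    have finT: "finite T" using Ts(1) finite_subset by blast
    have JK: "J \<subseteq> {..<K}" unfolding J_def using Ts(1) r
      by (auto simp: div_less_iff_less_mult mult.commute)
    have TV: "T \<subseteq> Vset r K J" unfolding Vset_def J_def using Ts(1) by auto
    have "card T = (\<Sum>c\<in>J. card {j\<in>T. j div r = c})"
    proof -
      have "T = (\<Union>c\<in>J. {j\<in>T. j div r = c})" unfolding J_def by auto
      moreover have "card (\<Union>c\<in>J. {j\<in>T. j div r = c}) = (\<Sum>c\<in>J. card {j\<in>T. j div r = c})"
        by (rule card_UN_disjoint) (use finT J_def in auto)
      ultimately show ?thesis by simp
    qed
    also have "\<dots> \<ge> (\<Sum>c\<in>J. 2)"
    proof (intro sum_mono)
      fix c assume c: "c \<in> J"
      have "c < K" using c JK by auto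
      then have ne1: "card {j\<in>T. j div r = c} \<noteq> 1" using Ts(3) unfolding good_def by auto
      have "{j\<in>T. j div r = c} \<noteq> {}" using c unfolding J_def by auto
      then have "card {j\<in>T. j div r = c} \<noteq> 0" using finT by simp
      then show "2 \<le> card {j\<in>T. j div r = c}" using ne1 by linarith
    qed
    finally have "2 * card J \<le> e" using Ts(2) by simp
    then have "card J \<le> e div 2" by linarith
    then have "J \<in> Js" unfolding Js_def using JK by simp
    moreover have "T \<in> A J" unfolding A_def using TV Ts(2) by simp
    ultimately show "T \<in> (\<Union>J\<in>Js. A J)" by blast
  qed
  have cardA: "\<And>J. J \<in> Js \<Longrightarrow> card (A J) = (r * card J) choose e"
  proof -
    fix J assume J: "J \<in> Js"
    have "card (Vset r K J) = r * card J" using J card_Vset[OF r, of J K] unfolding Js_def by simp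
    then show "card (A J) = (r * card J) choose e" unfolding A_def
      by (subst n_subsets) (auto intro: finite_subset[OF Vset_sub])
  qed
  have "(\<Union>J\<in>Js. A J) \<subseteq> Pow {..<r*K}" using Vset_sub unfolding A_def by blast
  then have finU: "finite (\<Union>J\<in>Js. A J)" by (rule finite_subset) simp
  have "Tc r K e \<le> card (\<Union>J\<in>Js. A J)" unfolding Tc_def
    by (rule card_mono[OF finU sub])
  also have "\<dots> \<le> (\<Sum>J\<in>Js. card (A J))" by (rule card_UN_le[OF finJs])
  also have "\<dots> = (\<Sum>J\<in>Js. (r * card J) choose e)" using cardA by simp
  also have "\<dots> = (\<Sum>i\<le>e div 2. (\<Sum>J\<in>{J. J \<in> Js \<and> card J = i}. (r * card J) choose e))"
    by (rule sum.group[symmetric]) (use finJs in \<open>auto simp: Js_def\<close>)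
  also have "\<dots> = (\<Sum>i\<le>e div 2. (K choose i) * ((r*i) choose e))"
  proof (intro sum.cong refl)
    fix i assume i: "i \<in> {..e div 2}"
    have "{J. J \<in> Js \<and> card J = i} = {J. J \<subseteq> {..<K} \<and> card J = i}" using i unfolding Js_def by auto
    moreover have "card {J. J \<subseteq> {..<K} \<and> card J = i} = K choose i" by (subst n_subsets) auto
    ultimately show "(\<Sum>J\<in>{J. J \<in> Js \<and> card J = i}. (r * card J) choose e) = (K choose i) * ((r*i) choose e)"
      by simp
  qed
  finally show ?thesis .
qed


lemma term_bound:
  fixes K M i e r :: nat and u :: real
  assumes i: "1 \<le> i" "2 * i \<le> e" and rK: "r * K = M" and riM: "r * i \<le> M" and M: "M > 0"
    and u: "0 \<le> u" and x: "real (r*i) / real M \<le> u / 3"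
  shows "real (K choose i) * real ((r*i) choose e) \<le> real (M choose e) * u ^ (e - i)"
proof -
  define x where "x = real (r*i) / real M"
  have x0: "x \<ge> 0" unfolding x_def by simp
  have A: "real ((r*i) choose e) \<le> real (M choose e) * x ^ e"
  proof -
    have "real ((r*i) choose e) * real M ^ e \<le> real (M choose e) * real (r*i) ^ e" by (rule choose_ratio[OF riM])
    then have "real ((r*i) choose e) \<le> real (M choose e) * real (r*i) ^ e / real M ^ e"
      using M by (simp add: field_simps)
    then show ?thesis unfolding x_def by (simp add: power_divide)
  qed
  have B: "real (K choose i) \<le> (3 * real K / real i) ^ i"
  proof -
    have "real (K choose i) * real i ^ i \<le> (3 * real K) ^ i" by (rule choose_le_3)
    then show ?thesis using i by (simp add: field_simps power_divide)
  qed
  have prodeq: "(3 * real K / real i) * x = 3"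
  proof -
    have "real r * real K = real M" using rK by (metis of_nat_mult)
    then show ?thesis unfolding x_def using i M by (simp add: field_simps)
  qed
  have "real (K choose i) * real ((r*i) choose e) \<le> (3 * real K / real i) ^ i * (real (M choose e) * x ^ e)"
    using A B by (intro mult_mono) auto
  also have "x ^ e = x ^ i * x ^ (e - i)" using i by (simp add: power_add[symmetric])
  also have "(3 * real K / real i) ^ i * (real (M choose e) * (x ^ i * x ^ (e - i)))
     = real (M choose e) * (((3 * real K / real i) * x) ^ i * x ^ (e - i))"
  proof -
    define y where "y = 3 * real K / real i"
    define C where "C = real (M choose e)"
    define z where "z = x ^ (e - i)"
    have "y ^ i * (C * (x ^ i * z)) = C * ((y * x) ^ i * z)" by (simp add: power_mult_distrib mult_ac)
    then show ?thesis unfolding y_def C_def z_def .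
  qed
  also have "\<dots> = real (M choose e) * (3 ^ i * x ^ (e - i))" unfolding prodeq ..
  also have "\<dots> \<le> real (M choose e) * (3 ^ i * (u/3) ^ (e - i))"
    using x x0 unfolding x_def by (intro mult_left_mono power_mono) auto
  also have "3 ^ i * (u/3) ^ (e - i) \<le> u ^ (e - i)"
  proof -
    have "(3::real) ^ i \<le> 3 ^ (e - i)" using i by (intro power_increasing) auto
    then have "3 ^ i * (u/3) ^ (e - i) \<le> 3 ^ (e - i) * (u/3) ^ (e - i)" using u by (intro mult_right_mono) auto
    also have "\<dots> = u ^ (e - i)" by (simp add: power_mult_distrib[symmetric])
    finally show ?thesis .
  qed
  then have "real (M choose e) * (3 ^ i * (u/3) ^ (e - i)) \<le> real (M choose e) * u ^ (e - i)"
    by (intro mult_left_mono) auto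
  finally show ?thesis .
qed

lemma pow3: "a ^ s * (b ^ s * c ^ s) = (a * b * c :: real) ^ s"
  by (simp add: power_mult_distrib)

definition Dc :: "nat \<Rightarrow> nat \<Rightarrow> real" where
  "Dc l r = 2 ^ l * (9 * real r / 2) * sqrt (3 * real r / 2)"

lemma avg_term_bound:
  fixes l r n s :: nat
  assumes l: "l \<ge> 3" and r: "r > 0" and dv: "r dvd l*n" and s: "1 \<le> s" and w: "3 * r * s \<le> 2*n"
  shows "real (n choose s) * (real (Tc r (l*n div r) (l * s)) / real ((l*n) choose (l * s)))
         \<le> (Dc l r * sqrt (real s / real n)) ^ s"
proof -
  define e where "e = l * s"
  define M where "M = l*n"
  define K where "K = M div r"
  define u where "u = 3 * real r * real s / (2 * real n)"
  define q where "q = e - e div 2"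
  have rK: "r * K = M" unfolding K_def M_def using dv by simp
  have rs: "r * s \<ge> 1" using r s by simp
  have n0: "n > 0" using w rs by linarith
  have "1 * s \<le> r * s" by (rule mult_le_mono1) (use r in linarith)
  then have sn: "s \<le> n" using w by linarith
  have M0: "M > 0" unfolding M_def using l n0 by simp
  have eM: "e \<le> M" unfolding e_def M_def using sn by simp
  have "3 * 1 \<le> l * s" by (rule mult_le_mono) (use l s in linarith)+
  then have e3: "e \<ge> 3" unfolding e_def by simp
  have "3 * s \<le> l * s" by (rule mult_le_mono1) (use l in linarith)
  then have e3s: "3 * s \<le> e" unfolding e_def .
  have CM: "real (M choose e) > 0" using eM by simp
  have u0: "u > 0" unfolding u_def using r s n0 by simp
  have u1: "u \<le> 1"
  proof -
    have "real (3 * r * s) \<le> real (2*n)" using w by (simp only: of_nat_le_iff)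
    then show ?thesis unfolding u_def using n0 by (simp add: divide_le_eq)
  qed
  have terms: "\<And>i. i \<in> {..e div 2} \<Longrightarrow> real (K choose i) * real ((r*i) choose e) \<le> real (M choose e) * u ^ q"
  proof -
    fix i assume i: "i \<in> {..e div 2}"
    show "real (K choose i) * real ((r*i) choose e) \<le> real (M choose e) * u ^ q"
    proof (cases "i = 0")
      case True then show ?thesis using e3 CM u0 by (simp add: binomial_eq_0)
    next
      case False
      then have i1: "1 \<le> i" by simp
      have i2: "2 * i \<le> e" using i by auto
      have riM: "r * i \<le> M"
      proof -
        have a: "r*(2*i) \<le> r*(l * s)" using i2 unfolding e_def by (rule mult_le_mono2)
        have b: "l*(r * s) \<le> l*(2*n)" using w by (intro mult_le_mono2) linarith
        have c0: "r*(l * s) = l*(r * s)" by (simp add: mult_ac)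
        have c1: "2*(r*i) = r*(2*i)" by (simp add: mult_ac)
        have c2: "l*(2*n) = 2*(l*n)" by (simp add: mult_ac)
        have "2*(r*i) \<le> 2*(l*n)" unfolding c1 c2[symmetric] using a b c0 by linarith
        then show ?thesis unfolding M_def by linarith
      qed
      have x: "real (r*i) / real M \<le> u / 3"
      proof -
        have a: "real (2*(r*i)) \<le> real (r*e)" using mult_le_mono2[OF i2, of r] by (simp only: of_nat_le_iff mult_ac)
        have "real (r*i) / real M \<le> real (r * e) / (2 * real M)" using a M0 by (simp add: field_simps)
        also have "real (r * e) / (2 * real M) = u / 3" unfolding u_def e_def M_def using l n0 by (simp add: field_simps)
        finally show ?thesis .
      qed
      have "real (K choose i) * real ((r*i) choose e) \<le> real (M choose e) * u ^ (e - i)"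
        by (rule term_bound[OF i1 i2 rK riM M0 _ x]) (use u0 in simp)
      also have "u ^ (e - i) \<le> u ^ q" unfolding q_def using u0 u1 i2 by (intro power_decreasing) auto
      then have "real (M choose e) * u ^ (e - i) \<le> real (M choose e) * u ^ q" using CM by (intro mult_left_mono) auto
      finally show ?thesis .
    qed
  qed
  have "real (Tc r K e) \<le> real (\<Sum>i\<le>e div 2. (K choose i) * ((r*i) choose e))"
    using Tc_upper[OF r, of K e] by (simp only: of_nat_le_iff)
  then have Tc_sum: "real (Tc r K e) \<le> (\<Sum>i\<le>e div 2. real (K choose i) * real ((r*i) choose e))"
    by (simp add: of_nat_sum)
  also have "\<dots> \<le> (\<Sum>i\<le>e div 2. real (M choose e) * u ^ q)" by (rule sum_mono[OF terms])
  also have "\<dots> = real (e div 2 + 1) * (real (M choose e) * u ^ q)" by simp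
  finally have T1: "real (Tc r K e) / real (M choose e) \<le> real (e div 2 + 1) * u ^ q"
    using CM by (simp add: divide_le_eq algebra_simps)
  have T2: "real (e div 2 + 1) \<le> (2 ^ l) ^ s"
  proof -
    have "e div 2 + 1 \<le> 2 ^ e" using less_exp[of e] by linarith
    then have "real (e div 2 + 1) \<le> 2 ^ e" by (metis of_nat_le_iff of_nat_numeral of_nat_power)
    then show ?thesis unfolding e_def by (simp add: power_mult)
  qed
  have T3: "u ^ q \<le> (sqrt u ^ 3) ^ s"
  proof -
    have "u ^ q = sqrt u ^ (2 * q)" using u0 by (simp add: power_mult)
    also have "\<dots> \<le> sqrt u ^ (3 * s)"
    proof (rule power_decreasing)
      have "e div 2 * 2 \<le> e" by (rule div_times_less_eq_dividend)
      then show "3 * s \<le> 2 * q" unfolding q_def using e3s by linarith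
      show "0 \<le> sqrt u" "sqrt u \<le> 1" using u0 u1 by auto
    qed
    finally show ?thesis by (simp add: power_mult)
  qed
  have C1: "real (n choose s) \<le> (3 * real n / real s) ^ s"
  proof -
    have "real (n choose s) * real s ^ s \<le> (3 * real n) ^ s" by (rule choose_le_3)
    then show ?thesis using s by (simp add: field_simps power_divide)
  qed
  have "real (n choose s) * (real (Tc r K e) / real (M choose e))
      \<le> (3 * real n / real s) ^ s * (real (e div 2 + 1) * u ^ q)"
    using C1 T1 CM by (intro mult_mono) auto
  also have "\<dots> \<le> (3 * real n / real s) ^ s * ((2 ^ l) ^ s * (sqrt u ^ 3) ^ s)"
    using T2 T3 u0 by (intro mult_left_mono mult_mono) auto
  also have "\<dots> = (3 * real n / real s * 2 ^ l * sqrt u ^ 3) ^ s" by (rule pow3)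
  also have "3 * real n / real s * 2 ^ l * sqrt u ^ 3 = Dc l r * sqrt (real s / real n)"
  proof -
    have su: "sqrt u ^ 3 = u * sqrt u" using u0 by (simp add: power3_eq_cube real_sqrt_mult_self)
    have sq: "sqrt u = sqrt (3 * real r / 2) * sqrt (real s / real n)"
    proof -
      have "u = (3 * real r / 2) * (real s / real n)" unfolding u_def by (simp add: field_simps)
      then have "sqrt u = sqrt ((3 * real r / 2) * (real s / real n))" by (rule arg_cong)
      then show ?thesis by (simp only: real_sqrt_mult)
    qed
    define A where "A = 3 * real n / real s"
    have hA: "A * u = 9 * real r / 2" unfolding u_def A_def using s n0 by (simp add: field_simps)
    have "3 * real n / real s * 2 ^ l * sqrt u ^ 3 = A * 2 ^ l * (u * sqrt u)" unfolding A_def su ..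
    also have "\<dots> = 2 ^ l * (A * u) * sqrt u" by (simp only: mult_ac)
    also have "\<dots> = 2 ^ l * (9 * real r / 2) * (sqrt (3 * real r / 2) * sqrt (real s / real n))"
      unfolding hA sq ..
    also have "\<dots> = Dc l r * sqrt (real s / real n)" unfolding Dc_def by (simp only: mult_ac)
    finally show ?thesis .
  qed
  finally show ?thesis unfolding e_def M_def K_def .
qed


lemma sum_s_half: "(\<Sum>s<N. real s / 2 ^ s) = 2 - 2 * (real N + 1) / 2 ^ N"
proof (induction N)
  case 0 then show ?case by simp
next
  case (Suc N)
  have "(\<Sum>s<Suc N. real s / 2 ^ s) = (\<Sum>s<N. real s / 2 ^ s) + real N / 2 ^ N" by simp
  also have "\<dots> = 2 - 2 * (real N + 1) / 2 ^ N + real N / 2 ^ N" using Suc.IH by simp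
  also have "\<dots> = 2 - 2 * (real (Suc N) + 1) / 2 ^ Suc N" by (simp add: field_simps)
  finally show ?case .
qed

lemma sum_s_half_le: "(\<Sum>s\<in>{1..S}. real s / 2 ^ s) \<le> 2"
proof -
  have "(\<Sum>s\<in>{1..S}. real s / 2 ^ s) \<le> (\<Sum>s<Suc S. real s / 2 ^ s)"
    by (rule sum_mono2) auto
  also have "\<dots> = 2 - 2 * (real (Suc S) + 1) / 2 ^ Suc S" by (rule sum_s_half)
  also have "\<dots> \<le> 2" by simp
  finally show ?thesis .
qed

lemma prob_le_sum:
  fixes \<omega> :: real
  shows "prob_small_stop2 l1 l2 r1 r2 n \<omega> \<le> (\<Sum>s\<in>{1..nat \<lfloor>\<omega> * real n\<rfloor>}. avg_N2 l1 l2 r1 r2 n s)"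
proof -
  let ?P = "socket_perms (l1*n) \<times> socket_perms (l2*n)"
  let ?Q = "\<lambda>p1 p2. \<exists>S. S \<noteq> {} \<and> real (card S) \<le> \<omega> * real n \<and> stopping2 l1 l2 r1 r2 n p1 p2 S"
  let ?c = "\<lambda>p1 p2 s. real (card {S. stopping2 l1 l2 r1 r2 n p1 p2 S \<and> card S = s})"
  let ?I = "{1..nat \<lfloor>\<omega> * real n\<rfloor>}"
  define D where "D = real (card (socket_perms (l1*n)) * card (socket_perms (l2*n)))"
  have D0: "D > 0" unfolding D_def card_socket_perms by simp
  have finP: "finite ?P" using finite_socket_perms by simp
  have "real (card {x \<in> ?P. ?Q (fst x) (snd x)}) = (\<Sum>x\<in>?P. if ?Q (fst x) (snd x) then 1 else 0)"
    by (rule card_filter_sum[OF finP])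
  also have "\<dots> \<le> (\<Sum>x\<in>?P. \<Sum>s\<in>?I. ?c (fst x) (snd x) s)"
  proof (rule sum_mono)
    fix x assume "x \<in> ?P"
    show "(if ?Q (fst x) (snd x) then 1 else 0) \<le> (\<Sum>s\<in>?I. ?c (fst x) (snd x) s)"
    proof (cases "?Q (fst x) (snd x)")
      case True
      then obtain S where S: "S \<noteq> {}" "real (card S) \<le> \<omega> * real n" "stopping2 l1 l2 r1 r2 n (fst x) (snd x) S"
        by blast
      have Sn: "S \<subseteq> {..<n}" using S(3) unfolding stopping2_def by simp
      then have fS: "finite S" using finite_subset by blast
      have k1: "card S \<ge> 1" using S(1) fS by (simp add: Suc_le_eq card_gt_0_iff)
      have k2: "card S \<le> nat \<lfloor>\<omega> * real n\<rfloor>" using S(2) by (intro le_nat_floor) simp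
      have fin: "finite {S. stopping2 l1 l2 r1 r2 n (fst x) (snd x) S \<and> card S = card S}"
        by (rule finite_subset[of _ "Pow {..<n}"]) (auto simp: stopping2_def)
      have "1 \<le> ?c (fst x) (snd x) (card S)"
      proof -
        have "S \<in> {S'. stopping2 l1 l2 r1 r2 n (fst x) (snd x) S' \<and> card S' = card S}" using S(3) by simp
        then have "card {S'. stopping2 l1 l2 r1 r2 n (fst x) (snd x) S' \<and> card S' = card S} \<noteq> 0"
          using fin by auto
        then show ?thesis by simp
      qed
      also have "\<dots> \<le> (\<Sum>s\<in>?I. ?c (fst x) (snd x) s)"
        by (rule member_le_sum) (use k1 k2 in auto)
      finally show ?thesis unfolding if_P[OF True] .
    next
      case False
      show ?thesis unfolding if_not_P[OF False] by (rule sum_nonneg) simp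
    qed
  qed
  also have "\<dots> = (\<Sum>s\<in>?I. \<Sum>x\<in>?P. ?c (fst x) (snd x) s)" by (rule sum.swap)
  also have "\<dots> = (\<Sum>s\<in>?I. avg_N2 l1 l2 r1 r2 n s * D)"
  proof (intro sum.cong refl)
    fix s
    have e: "avg_N2 l1 l2 r1 r2 n s = (\<Sum>(p1,p2)\<in>?P. ?c p1 p2 s) / D"
      unfolding avg_N2_def D_def by (rule refl)
    have "avg_N2 l1 l2 r1 r2 n s * D = (\<Sum>(p1,p2)\<in>?P. ?c p1 p2 s)"
      unfolding e using D0 by simp
    then show "(\<Sum>x\<in>?P. ?c (fst x) (snd x) s) = avg_N2 l1 l2 r1 r2 n s * D"
      by (simp add: case_prod_beta)
  qed
  also have "\<dots> = (\<Sum>s\<in>?I. avg_N2 l1 l2 r1 r2 n s) * D" by (simp add: sum_distrib_right)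
  finally have "real (card {x \<in> ?P. ?Q (fst x) (snd x)}) / D \<le> (\<Sum>s\<in>?I. avg_N2 l1 l2 r1 r2 n s)"
    using D0 by (simp add: divide_le_eq)
  moreover have "{x \<in> ?P. ?Q (fst x) (snd x)} = {(p1,p2)\<in>?P. ?Q p1 p2}" by auto
  ultimately show ?thesis unfolding prob_small_stop2_def D_def by simp
qed


lemma part2:
  fixes l1 l2 r :: nat
  assumes l1: "l1 \<ge> 3" and l2: "l2 > 0" and r: "r \<ge> 3"
  shows "\<exists>\<omega>s::real. \<omega>s > 0 \<and>
            ((\<lambda>n. prob_small_stop2 l1 l2 r r n \<omega>s) \<longlongrightarrow> 0) (admissible_n l1 l2 r r)"
proof -
  let ?F = "admissible_n l1 l2 r r"
  have rp: "r > 0" using r by simp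
  have l1p: "l1 > 0" using l1 by simp
  define D where "D = Dc l1 r"
  have D0: "D > 0" unfolding D_def Dc_def using rp by simp
  define ws where "ws = min (1 / (4 * D^2)) (2 / (3 * real r))"
  have ws0: "ws > 0" unfolding ws_def using D0 rp by simp
  have ws1: "ws \<le> 1 / (4 * D^2)" "ws \<le> 2 / (3 * real r)" unfolding ws_def by auto
  have hbound: "prob_small_stop2 l1 l2 r r n ws \<le> 4 * D * sqrt (1 / real n)"
    if dv: "r dvd l1*n" "r dvd l2*n" and n0: "n > 0" for n
  proof -
    let ?I = "{1..nat \<lfloor>ws * real n\<rfloor>}"
    have hterm: "avg_N2 l1 l2 r r n s \<le> 2 * D * sqrt (1 / real n) * (real s / 2 ^ s)" if s: "s \<in> ?I" for s
    proof -
      have s1: "1 \<le> s" using s by simp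
      have sw: "real s \<le> ws * real n"
      proof -
        have "s \<le> nat \<lfloor>ws * real n\<rfloor>" using s by simp
        then show ?thesis using nat_floor_bounds(1)[of "ws * real n"] ws0 by (smt (verit) of_nat_0_le_iff of_nat_le_iff mult_nonneg_nonneg)
      qed
      have w3: "3 * r * s \<le> 2 * n"
      proof -
        have "real (3 * r * s) = 3 * real r * real s" by simp
        also have "\<dots> \<le> 3 * real r * (ws * real n)" using sw rp by (intro mult_left_mono) auto
        also have "\<dots> \<le> 3 * real r * (2 / (3 * real r) * real n)" using ws1(2) rp by (intro mult_left_mono mult_right_mono) auto
        also have "\<dots> = real (2 * n)" using rp by simp
        finally show ?thesis by (simp only: of_nat_le_iff)
      qed
      have "1 * s \<le> r * s" by (rule mult_le_mono1) (use rp in linarith)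
      then have sn: "s \<le> n" using w3 by linarith
      let ?C2 = "real (Tc r (l2*n div r) (l2 * s)) / real ((l2*n) choose (l2 * s))"
      have C2: "?C2 \<le> 1"
      proof -
        have rK: "r * (l2*n div r) = l2*n" using dv by simp
        have "Tc r (l2*n div r) (l2 * s) \<le> (l2*n) choose (l2 * s)" using Tc_le_choose[of r "l2*n div r" "l2 * s"] rK by simp
        moreover have "(l2*n) choose (l2 * s) > 0" using sn by simp
        ultimately show ?thesis by (simp add: divide_le_eq)
      qed
      have "avg_N2 l1 l2 r r n s = real (n choose s)
        * (real (Tc r (l1*n div r) (l1 * s)) / real ((l1*n) choose (l1 * s))) * ?C2"
        by (rule avg_N2_formula[OF l1p l2 rp dv sn])
      also have "\<dots> \<le> real (n choose s) * (real (Tc r (l1*n div r) (l1 * s)) / real ((l1*n) choose (l1 * s))) * 1"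
        using C2 by (intro mult_left_mono) auto
      also have "\<dots> \<le> (D * sqrt (real s / real n)) ^ s"
        unfolding D_def using avg_term_bound[OF l1 rp dv(1) s1 w3] by simp
      also have "\<dots> \<le> 2 * D * sqrt (1 / real n) * (real s / 2 ^ s)"
      proof -
        define a where "a = D * sqrt (real s / real n)"
        have a0: "a \<ge> 0" unfolding a_def using D0 by simp
        have "a^2 = D^2 * (real s / real n)" unfolding a_def by (simp add: power_mult_distrib)
        also have "\<dots> \<le> D^2 * ws" using sw n0 D0 by (intro mult_left_mono) (auto simp: divide_le_eq mult.commute)
        also have "\<dots> \<le> D^2 * (1 / (4 * D^2))" using ws1(1) by (intro mult_left_mono) auto
        also have "\<dots> = (1/2)^2" using D0 by (simp add: field_simps power2_eq_square)
        finally have "a \<le> 1/2" using a0 using power2_le_imp_le[of a "1/2"] by simp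
        then have "a ^ (s - 1) \<le> (1/2) ^ (s - 1)" using a0 by (intro power_mono) auto
        moreover have "a ^ s = a * a ^ (s - 1)" using s1 by (cases s) auto
        ultimately have "a ^ s \<le> a * (1/2) ^ (s - 1)" using a0 by (simp add: mult_left_mono)
        also have "a \<le> D * sqrt (1 / real n) * real s"
        proof -
          have "sqrt (real s / real n) = sqrt (real s) * sqrt (1 / real n)" by (simp add: real_sqrt_divide)
          moreover have "sqrt (real s) \<le> real s"
          proof -
            have "real s \<le> real s ^ 2" using s1 by (simp add: power2_eq_square)
            then have "sqrt (real s) \<le> sqrt (real s ^ 2)" by (rule real_sqrt_le_mono)
            then show ?thesis by (simp only: real_sqrt_abs abs_of_nat)
          qed
          ultimately have "sqrt (real s / real n) \<le> real s * sqrt (1 / real n)"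
            by (simp add: mult_right_mono)
          then show ?thesis unfolding a_def using D0 by (simp add: mult_left_mono mult.assoc mult.commute)
        qed
        then have "a * (1/2) ^ (s - 1) \<le> D * sqrt (1 / real n) * real s * (1/2) ^ (s - 1)"
          by (intro mult_right_mono) auto
        also have "(1/2::real) ^ (s - 1) = 2 / 2 ^ s"
          using s1 by (cases s) (auto simp: power_one_over)
        finally show ?thesis unfolding a_def by (simp add: field_simps)
      qed
      finally show ?thesis .
    qed
    have "prob_small_stop2 l1 l2 r r n ws \<le> (\<Sum>s\<in>?I. avg_N2 l1 l2 r r n s)" by (rule prob_le_sum)
    also have "\<dots> \<le> (\<Sum>s\<in>?I. 2 * D * sqrt (1 / real n) * (real s / 2 ^ s))" by (rule sum_mono[OF hterm])
    also have "\<dots> = 2 * D * sqrt (1 / real n) * (\<Sum>s\<in>?I. real s / 2 ^ s)" by (simp add: sum_distrib_left)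
    also have "\<dots> \<le> 2 * D * sqrt (1 / real n) * 2" using D0 sum_s_half_le by (intro mult_left_mono) auto
    finally show ?thesis by simp
  qed
  have nonneg: "\<And>n. prob_small_stop2 l1 l2 r r n ws \<ge> 0" unfolding prob_small_stop2_def by simp
  have lim0: "((\<lambda>n. 4 * D * sqrt (1 / real n)) \<longlongrightarrow> 0) ?F"
  proof -
    have "((\<lambda>n::nat. 1 / real n) \<longlongrightarrow> 0) at_top" by (rule lim_const_over_n)
    then have "((\<lambda>n::nat. sqrt (1 / real n)) \<longlongrightarrow> sqrt 0) at_top" by (rule tendsto_real_sqrt)
    then have "((\<lambda>n::nat. 4 * D * sqrt (1 / real n)) \<longlongrightarrow> 4 * D * 0) at_top" by (intro tendsto_mult_left) simp
    then show ?thesis using tendsto_mono[OF adm_le] by simp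
  qed
  have ev: "eventually (\<lambda>n. prob_small_stop2 l1 l2 r r n ws \<le> 4 * D * sqrt (1 / real n)) ?F"
    using adm_dvd filter_leD[OF adm_le eventually_gt_at_top[of 0]]
    by eventually_elim (use hbound in blast)
  have "((\<lambda>n. prob_small_stop2 l1 l2 r r n ws) \<longlongrightarrow> 0) ?F"
    by (rule tendsto_sandwich[OF _ ev tendsto_const lim0]) (simp add: nonneg)
  then show ?thesis using ws0 by blast
qed


theorem lemma2:
  fixes l1 l2 r :: nat
  assumes "l1 \<ge> 3" and "l2 \<ge> 1" and "r > 0"
    and "1 - real (l1 + l2) / real r > 0"
  shows "(\<forall>\<omega>::real. 0 < \<omega> \<and> \<omega> < 1 \<longrightarrow>
            (\<exists>G::real.
              ((\<lambda>n. ln (avg_N2 l1 l2 r r n (nat \<lfloor>\<omega> * real n\<rfloor>)) / real n)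
                 \<longlongrightarrow> G) (admissible_n l1 l2 r r)
            \<and> ((\<lambda>n. ln (avg_N1 (l1 + l2) r n (nat \<lfloor>\<omega> * real n\<rfloor>)) / real n)
                 \<longlongrightarrow> G) (admissible_n l1 l2 r r)))
       \<and> (\<exists>\<omega>s::real. \<omega>s > 0 \<and>
            ((\<lambda>n. prob_small_stop2 l1 l2 r r n \<omega>s) \<longlongrightarrow> 0) (admissible_n l1 l2 r r))"
proof -
  have "real (l1 + l2) / real r < 1" using assms(4) by linarith
  then have "real (l1 + l2) < real r" using assms(3) by (simp add: divide_less_eq)
  then have lr: "l1 + l2 < r" by linarith
  have r3: "r \<ge> 3" using lr assms(1) by linarith
  have l1: "l1 > 0" using assms(1) by linarith
  have l2: "l2 > 0" using assms(2) by linarith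
  show ?thesis
  proof
    show "\<forall>\<omega>::real. 0 < \<omega> \<and> \<omega> < 1 \<longrightarrow>
            (\<exists>G::real.
              ((\<lambda>n. ln (avg_N2 l1 l2 r r n (nat \<lfloor>\<omega> * real n\<rfloor>)) / real n)
                 \<longlongrightarrow> G) (admissible_n l1 l2 r r)
            \<and> ((\<lambda>n. ln (avg_N1 (l1 + l2) r n (nat \<lfloor>\<omega> * real n\<rfloor>)) / real n)
                 \<longlongrightarrow> G) (admissible_n l1 l2 r r))"
      using part1[OF l1 l2 r3] by blast
    show "\<exists>\<omega>s::real. \<omega>s > 0 \<and>
            ((\<lambda>n. prob_small_stop2 l1 l2 r r n \<omega>s) \<longlongrightarrow> 0) (admissible_n l1 l2 r r)"
      by (rule part2[OF assms(1) l2 r3])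
  qed
qed

end
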